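(* Let $G$ be a layered ADT network with source $S$ in layer $1$, in which every supernode has exactly $n$ input ports and $n$ output ports. Let $R=\min_{T\in\mathcal T}\mathrm{mincut}(S,T)$. Let $1\le l\le\lambda-1$, and let $W'$ be a regular set consisting of $R$ input ports of supernodes at layer $l+1$. Then there is a regular set $W$ consisting of $R$ output ports of supernodes at layer $l$ such that the $R\times R$ incidence matrix $G_{(W,W')}$ is full rank.
   Context: Layered ADT network. $G$ is a directed acyclic network of supernodes arranged in layers $1,\dots,\lambda$. All links go from output ports of supernodes at layer $l$ to input ports of supernodes at layer $l+1$, and the source $S$ is at layer $1$. Each supernode $V$ has $n$ input ports and $n$ output ports, and symbols lie in a finite field $\mathbb F_q$. An output port sends the same symbol on all its outgoing edges, and an input port receives the $\mathbb F_q$-sum of its incoming symbols. For supernodes $S,T$, $\mathrm{mincut}(S,T)=\min_\Omega\mathrm{rank}(G_\Omega)$, with the minimum over partitions $\Omega\cup\Omega^c$ of the supernodes with $S\in\Omega$ and $T\in\Omega^c$. $G_\Omega$ is the $0$-$1$ incidence matrix of the edges from output ports in $\Omega$ to input ports in $\Omega^c$. $\mathcal T$ is the set of destination supernodes and $R=\min_{T\in\mathcal T}\mathrm{mincut}(S,T)$. Virtual sink and regular sets. Let $W$ be a set of $R$ ports of supernodes in a single layer such that, for each supernode $V$, $W$ contains either a subset of $O(V)$, or a subset of $I(V)$, or no ports of $V$. The virtual sink $T(W)$ is a new supernode, attached as follows. - Each output port in $W$ is connected by one edge to a distinct input port of $T(W)$. - If $W$ contains $p$ input ports of a supernode $V$,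 all input ports of $V$ not in $W$ are disconnected, and the $p$ upper (first) output ports of $V$ are each connected to a distinct input port of $T(W)$. $W$ is called regular if $\mathrm{mincut}(S,T(W))=R$ in the resulting network. For a set $W$ of $R$ output ports at layer $l$ and a set $W'$ of $R$ input ports at layer $l+1$, $G_{(W,W')}$ is the $R\times R$ $0$-$1$ matrix whose $(w',w)$ entry is $1$ iff there is an edge from $w$ to $w'$. Full rank is taken over $\mathbb F_q$. *)

theory Defs
  imports Main
begin

text \<open>In the edge relation of a network,
a port is encoded as a pair (node, index); an edge \<open>((a,i),(b,j))\<close> goes from output
port \<open>i\<close> of \<open>a\<close> to input port \<open>j\<close> of \<open>b\<close>.\<close>

datatype 'v port = OutP 'v nat | InP 'v nat

fun port_node :: "'v port \<Rightarrow> 'v" where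
  "port_node (OutP v i) = v"
| "port_node (InP v j) = v"

definition indep_cols :: "'r set \<Rightarrow> 'c set \<Rightarrow> ('r \<Rightarrow> 'c \<Rightarrow> 'a::field) \<Rightarrow> bool" where
  "indep_cols A C M \<longleftrightarrow>
     (\<forall>c. (\<forall>r\<in>A. (\<Sum>b\<in>C. c b * M r b) = 0) \<longrightarrow> (\<forall>b\<in>C. c b = 0))"

definition rank_mat :: "'r set \<Rightarrow> 'c set \<Rightarrow> ('r \<Rightarrow> 'c \<Rightarrow> 'a::field) \<Rightarrow> nat" where
  "rank_mat A B M = Max {card C | C. C \<subseteq> B \<and> indep_cols A C M}"

text \<open>Rows are the input ports of \<open>N - \<Omega>\<close> and columns the output ports of \<open>\<Omega>\<close>; we only
list the ports incident to such an edge (the other rows/columns are zero and do not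
affect the rank).\<close>

definition cut_rank ::
  "'a::field itself \<Rightarrow> (('n \<times> 'q) \<times> ('n \<times> 'q)) set \<Rightarrow> 'n set \<Rightarrow> 'n set \<Rightarrow> nat" where
  "cut_rank F E N \<Omega> =
     rank_mat
       {q. \<exists>p. (p, q) \<in> E \<and> fst p \<in> \<Omega> \<and> fst q \<in> N - \<Omega>}
       {p. \<exists>q. (p, q) \<in> E \<and> fst p \<in> \<Omega> \<and> fst q \<in> N - \<Omega>}
       (\<lambda>q p. if (p, q) \<in> E then (1::'a) else 0)"

definition mincut ::
  "'a::field itself \<Rightarrow> 'n set \<Rightarrow> (('n \<times> 'q) \<times> ('n \<times> 'q)) set \<Rightarrow> 'n \<Rightarrow> 'n \<Rightarrow> nat" where
  "mincut F N E S T = Min {cut_rank F E N \<Omega> | \<Omega>. \<Omega> \<subseteq> N \<and> S \<in> \<Omega> \<and> T \<in> N - \<Omega>}"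

definition layered_adt_network ::
  "'v set \<Rightarrow> (('v \<times> nat) \<times> ('v \<times> nat)) set \<Rightarrow> nat \<Rightarrow> ('v \<Rightarrow> nat) \<Rightarrow> nat \<Rightarrow> 'v \<Rightarrow> bool" where
  "layered_adt_network V E n layer lam S \<longleftrightarrow>
     finite V \<and> S \<in> V \<and> layer S = 1 \<and>
     (\<forall>v\<in>V. 1 \<le> layer v \<and> layer v \<le> lam) \<and>
     (\<forall>a i b j. ((a, i), (b, j)) \<in> E \<longrightarrow>
        a \<in> V \<and> b \<in> V \<and> i < n \<and> j < n \<and> layer b = Suc (layer a))"

definition min_rate ::
  "'a::field itself \<Rightarrow> 'v set \<Rightarrow> (('v \<times> nat) \<times> ('v \<times> nat)) set \<Rightarrow> 'v \<Rightarrow> 'v set \<Rightarrow> nat" where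
  "min_rate F V E S \<T> = Min {mincut F V E S T | T. T \<in> \<T>}"

definition admissible_ports ::
  "'v set \<Rightarrow> nat \<Rightarrow> ('v \<Rightarrow> nat) \<Rightarrow> 'v port set \<Rightarrow> bool" where
  "admissible_ports V n layer W \<longleftrightarrow>
     finite W \<and>
     (\<forall>v i. OutP v i \<in> W \<longrightarrow> v \<in> V \<and> i < n) \<and>
     (\<forall>v j. InP v j \<in> W \<longrightarrow> v \<in> V \<and> j < n) \<and>
     (\<exists>l. \<forall>w\<in>W. layer (port_node w) = l) \<and>
     \<not> (\<exists>v i j. OutP v i \<in> W \<and> InP v j \<in> W)"

text \<open>The network with the virtual sink \<open>T(W)\<close> attached. Supernodes become
\<open>Some v\<close>, the virtual sink is \<open>None\<close>. Port indices become \<open>Inr i\<close> for the ports of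
original supernodes, and the input port of \<open>T(W)\<close> associated with \<open>w \<in> W\<close> is
\<open>Inl w\<close> (so distinct elements of \<open>W\<close> use distinct input ports of \<open>T(W)\<close>).
If \<open>W\<close> contains \<open>p\<close> input ports of \<open>v\<close>, the input ports of \<open>v\<close> not in \<open>W\<close> are
disconnected, and the \<open>k\<close>-th smallest input port of \<open>v\<close> in \<open>W\<close> is matched with
output port \<open>k\<close> of \<open>v\<close> (\<open>k < p\<close>, the \<open>p\<close> upper output ports), which is connected to the
corresponding input port of \<open>T(W)\<close>.\<close>

definition vsink_edges ::
  "(('v \<times> nat) \<times> ('v \<times> nat)) set \<Rightarrow> 'v port set \<Rightarrow>
   (('v option \<times> ('v port + nat)) \<times> ('v option \<times> ('v port + nat))) set" where
  "vsink_edges E W =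
     {((Some a, Inr i), (Some b, Inr j)) | a i b j.
        ((a, i), (b, j)) \<in> E \<and> \<not> ((\<exists>j'. InP b j' \<in> W) \<and> InP b j \<notin> W)}
   \<union> {((Some v, Inr i), (None, Inl (OutP v i))) | v i. OutP v i \<in> W}
   \<union> {((Some v, Inr (card {j'. InP v j' \<in> W \<and> j' < j})), (None, Inl (InP v j))) | v j.
        InP v j \<in> W}"

definition regular ::
  "'a::field itself \<Rightarrow> 'v set \<Rightarrow> (('v \<times> nat) \<times> ('v \<times> nat)) set \<Rightarrow> nat \<Rightarrow> ('v \<Rightarrow> nat) \<Rightarrow>
   'v \<Rightarrow> nat \<Rightarrow> 'v port set \<Rightarrow> bool" where
  "regular F V E n layer S R W \<longleftrightarrow>
     admissible_ports V n layer W \<and> card W = R \<and>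
     mincut F (insert None (Some ` V)) (vsink_edges E W) (Some S) None = R"

fun port_inc ::
  "'a::field itself \<Rightarrow> (('v \<times> nat) \<times> ('v \<times> nat)) set \<Rightarrow> 'v port \<Rightarrow> 'v port \<Rightarrow> 'a" where
  "port_inc F E (InP b j) (OutP a i) = (if ((a, i), (b, j)) \<in> E then 1 else 0)"
| "port_inc F E _ _ = 0"

end

theory Submission
  imports Defs
begin

lemma rank_set_finite:
  assumes "finite B"
  shows "finite {card C | C. C \<subseteq> B \<and> indep_cols A C M}"
proof -
  have "{card C | C. C \<subseteq> B \<and> indep_cols A C M} \<subseteq> card ` Pow B" by auto
  thus ?thesis using assms finite_subset by blast
qed

lemma indep_empty: "indep_cols A {} M"
  unfolding indep_cols_def by simp

lemma rank_mat_ge: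
  assumes "finite B" "C \<subseteq> B" "indep_cols A C M"
  shows "card C \<le> rank_mat A B M"
  unfolding rank_mat_def using assms rank_set_finite[OF assms(1)]
  by (intro Max_ge) auto

lemma rank_mat_obtain:
  assumes "finite B"
  obtains C where "C \<subseteq> B" "indep_cols A C M" "card C = rank_mat A B M"
proof -
  have ne: "{card C | C. C \<subseteq> B \<and> indep_cols A C M} \<noteq> {}"
    using indep_empty by blast
  have "rank_mat A B M \<in> {card C | C. C \<subseteq> B \<and> indep_cols A C M}"
    unfolding rank_mat_def using Max_in[OF rank_set_finite[OF assms] ne] .
  then obtain C where "rank_mat A B M = card C" "C \<subseteq> B" "indep_cols A C M" by blast
  thus ?thesis using that by simp
qed

lemma rank_mat_le_card:
  assumes "finite B" shows "rank_mat A B M \<le> card B"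
proof -
  obtain C where "C \<subseteq> B" "card C = rank_mat A B M"
    using rank_mat_obtain[OF assms] by metis
  thus ?thesis using card_mono[OF assms] by metis
qed

lemma rank_mat_empty [simp]: "rank_mat A {} M = 0"
  using rank_mat_le_card[of "{}" A M] by simp

lemma indep_mono_rows:
  assumes "A \<subseteq> A'" "indep_cols A C M" shows "indep_cols A' C M"
  using assms unfolding indep_cols_def by blast

lemma indep_subset:
  assumes "C' \<subseteq> C" "finite C" "indep_cols A C M" shows "indep_cols A C' M"
  unfolding indep_cols_def
proof (intro allI impI)
  fix c assume h: "\<forall>r\<in>A. (\<Sum>b\<in>C'. c b * M r b) = 0"
  define c' where "c' = (\<lambda>b. if b \<in> C' then c b else 0)"
  have "\<forall>r\<in>A. (\<Sum>b\<in>C. c' b * M r b) = 0"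
  proof
    fix r assume "r \<in> A"
    have "(\<Sum>b\<in>C. c' b * M r b) = (\<Sum>b\<in>C'. c' b * M r b)"
      using assms(1,2) by (intro sum.mono_neutral_right) (auto simp: c'_def)
    also have "\<dots> = (\<Sum>b\<in>C'. c b * M r b)" by (simp add: c'_def)
    finally show "(\<Sum>b\<in>C. c' b * M r b) = 0" using h \<open>r \<in> A\<close> by simp
  qed
  hence "\<forall>b\<in>C. c' b = 0" using assms(3) unfolding indep_cols_def by blast
  show "\<forall>b\<in>C'. c b = 0"
  proof
    fix b assume b: "b \<in> C'"
    hence "c' b = 0" using \<open>\<forall>b\<in>C. c' b = 0\<close> assms(1) by blast
    thus "c b = 0" using b by (simp add: c'_def)
  qed
qed

lemma rank_mono:
  assumes "A \<subseteq> A'" "B \<subseteq> B'" "finite B'"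
  shows "rank_mat A B M \<le> rank_mat A' B' M"
proof -
  have fB: "finite B" using assms finite_subset by blast
  obtain C where "C \<subseteq> B" "indep_cols A C M" "card C = rank_mat A B M"
    using rank_mat_obtain[OF fB] by metis
  thus ?thesis using rank_mat_ge[OF assms(3), of C A' M] indep_mono_rows[OF assms(1)] assms(2)
    by force
qed

lemma indep_cong:
  assumes "\<forall>r\<in>A. \<forall>b\<in>C. M r b = M' r b"
  shows "indep_cols A C M = indep_cols A C M'"
proof -
  have "\<And>c r. r \<in> A \<Longrightarrow> (\<Sum>b\<in>C. c b * M r b) = (\<Sum>b\<in>C. c b * M' r b)"
    using assms by (intro sum.cong) auto
  thus ?thesis unfolding indep_cols_def by simp
qed

lemma rank_cong:
  assumes "\<forall>r\<in>A. \<forall>b\<in>B. M r b = M' r b"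
  shows "rank_mat A B M = rank_mat A B M'"
proof -
  have "\<And>C. C \<subseteq> B \<Longrightarrow> indep_cols A C M = indep_cols A C M'"
    using assms by (intro indep_cong) blast
  hence "{card C | C. C \<subseteq> B \<and> indep_cols A C M} = {card C | C. C \<subseteq> B \<and> indep_cols A C M'}"
    by blast
  thus ?thesis unfolding rank_mat_def by simp
qed

lemma indep_reindex:
  assumes "inj_on g C"
  shows "indep_cols (f ` A) (g ` C) M = indep_cols A C (\<lambda>r b. M (f r) (g b))"
proof
  assume h: "indep_cols (f ` A) (g ` C) M"
  show "indep_cols A C (\<lambda>r b. M (f r) (g b))"
    unfolding indep_cols_def
  proof (intro allI impI)
    fix c assume hc: "\<forall>r\<in>A. (\<Sum>b\<in>C. c b * M (f r) (g b)) = 0"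
    define c' where "c' = (\<lambda>x. c (inv_into C g x))"
    have "\<forall>r\<in>f ` A. (\<Sum>b\<in>g ` C. c' b * M r b) = 0"
    proof
      fix r assume "r \<in> f ` A"
      then obtain a where a: "a \<in> A" "r = f a" by blast
      have "(\<Sum>b\<in>g ` C. c' b * M r b) = (\<Sum>b\<in>C. c' (g b) * M r (g b))"
        using sum.reindex[OF assms] by simp
      also have "\<dots> = (\<Sum>b\<in>C. c b * M (f a) (g b))"
        using assms a by (intro sum.cong) (auto simp: c'_def)
      finally show "(\<Sum>b\<in>g ` C. c' b * M r b) = 0" using hc a by simp
    qed
    hence "\<forall>b\<in>g ` C. c' b = 0" using h unfolding indep_cols_def by blast
    thus "\<forall>b\<in>C. c b = 0" using assms by (auto simp: c'_def)
  qed
next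
  assume h: "indep_cols A C (\<lambda>r b. M (f r) (g b))"
  show "indep_cols (f ` A) (g ` C) M"
    unfolding indep_cols_def
  proof (intro allI impI)
    fix c assume hc: "\<forall>r\<in>f ` A. (\<Sum>b\<in>g ` C. c b * M r b) = 0"
    have "\<forall>r\<in>A. (\<Sum>b\<in>C. (c \<circ> g) b * M (f r) (g b)) = 0"
    proof
      fix r assume "r \<in> A"
      have "(\<Sum>b\<in>C. (c \<circ> g) b * M (f r) (g b)) = (\<Sum>b\<in>g ` C. c b * M (f r) b)"
        using sum.reindex[OF assms, of "\<lambda>b. c b * M (f r) b"] by simp
      thus "(\<Sum>b\<in>C. (c \<circ> g) b * M (f r) (g b)) = 0" using hc \<open>r \<in> A\<close> by simp
    qed
    hence "\<forall>b\<in>C. (c \<circ> g) b = 0" using h unfolding indep_cols_def by blast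
    thus "\<forall>b\<in>g ` C. c b = 0" by auto
  qed
qed

lemma rank_reindex:
  assumes "inj_on g B" "finite B"
  shows "rank_mat (f ` A) (g ` B) M = rank_mat A B (\<lambda>r b. M (f r) (g b))"
proof -
  have "{card C | C. C \<subseteq> g ` B \<and> indep_cols (f ` A) C M}
      = {card C | C. C \<subseteq> B \<and> indep_cols A C (\<lambda>r b. M (f r) (g b))}"
  proof (intro set_eqI iffI)
    fix x assume "x \<in> {card C | C. C \<subseteq> g ` B \<and> indep_cols (f ` A) C M}"
    then obtain C where C: "x = card C" "C \<subseteq> g ` B" "indep_cols (f ` A) C M" by blast
    define D where "D = B \<inter> g -` C"
    have gD: "g ` D = C" using C(2) by (auto simp: D_def)
    have ij: "inj_on g D" using assms(1) by (rule inj_on_subset) (auto simp: D_def)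
    have "card D = x" using C(1) gD card_image[OF ij] by simp
    moreover have "indep_cols A D (\<lambda>r b. M (f r) (g b))"
      using indep_reindex[OF ij, of f A M] C(3) gD by simp
    ultimately show "x \<in> {card C | C. C \<subseteq> B \<and> indep_cols A C (\<lambda>r b. M (f r) (g b))}"
      by (auto simp: D_def)
  next
    fix x assume "x \<in> {card C | C. C \<subseteq> B \<and> indep_cols A C (\<lambda>r b. M (f r) (g b))}"
    then obtain D where D: "x = card D" "D \<subseteq> B" "indep_cols A D (\<lambda>r b. M (f r) (g b))" by blast
    have ij: "inj_on g D" using assms(1) D(2) by (rule inj_on_subset)
    show "x \<in> {card C | C. C \<subseteq> g ` B \<and> indep_cols (f ` A) C M}"
      using D indep_reindex[OF ij, of f A M] card_image[OF ij]
      by (intro CollectI exI[of _ "g ` D"]) auto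
  qed
  thus ?thesis unfolding rank_mat_def by simp
qed

lemma rank_zero_rows:
  assumes "A \<subseteq> A'" "\<forall>r\<in>A' - A. \<forall>b\<in>B. M r b = 0"
  shows "rank_mat A' B M = rank_mat A B M"
proof -
  have "\<And>C. C \<subseteq> B \<Longrightarrow> indep_cols A' C M = indep_cols A C M"
  proof -
    fix C assume "C \<subseteq> B"
    hence z: "\<And>c r. r \<in> A' - A \<Longrightarrow> (\<Sum>b\<in>C. c b * M r b) = 0"
      using assms(2) by (intro sum.neutral) auto
    show "indep_cols A' C M = indep_cols A C M"
    proof -
      have "\<And>c. (\<forall>r\<in>A'. (\<Sum>b\<in>C. c b * M r b) = 0) = (\<forall>r\<in>A. (\<Sum>b\<in>C. c b * M r b) = 0)"
      proof
        fix c assume "\<forall>r\<in>A'. (\<Sum>b\<in>C. c b * M r b) = 0"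
        thus "\<forall>r\<in>A. (\<Sum>b\<in>C. c b * M r b) = 0" using assms(1) by blast
      next
        fix c assume h: "\<forall>r\<in>A. (\<Sum>b\<in>C. c b * M r b) = 0"
        show "\<forall>r\<in>A'. (\<Sum>b\<in>C. c b * M r b) = 0"
        proof
          fix r assume "r \<in> A'"
          show "(\<Sum>b\<in>C. c b * M r b) = 0"
          proof (cases "r \<in> A")
            case True thus ?thesis using h by blast
          next
            case False thus ?thesis using z \<open>r \<in> A'\<close> by blast
          qed
        qed
      qed
      thus ?thesis unfolding indep_cols_def by simp
    qed
  qed
  hence "{card C | C. C \<subseteq> B \<and> indep_cols A' C M} = {card C | C. C \<subseteq> B \<and> indep_cols A C M}"
    by blast
  thus ?thesis unfolding rank_mat_def by simp
qed

lemma indep_no_zero_col: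
  fixes M :: "'r \<Rightarrow> 'c \<Rightarrow> 'a::field"
  assumes "indep_cols A C M" "b \<in> C" "finite C" "\<forall>r\<in>A. M r b = 0"
  shows False
proof -
  define c :: "'c \<Rightarrow> 'a" where "c = (\<lambda>x. if x = b then 1 else 0)"
  have "\<forall>r\<in>A. (\<Sum>x\<in>C. c x * M r x) = 0"
  proof
    fix r assume "r \<in> A"
    have "(\<Sum>x\<in>C. c x * M r x) = c b * M r b"
      using assms(2,3) by (intro sum.remove[THEN trans]) (auto simp: c_def intro!: sum.neutral)
    thus "(\<Sum>x\<in>C. c x * M r x) = 0" using assms(4) \<open>r \<in> A\<close> by simp
  qed
  hence "c b = 0" using assms(1,2) unfolding indep_cols_def by blast
  thus False by (simp add: c_def)
qed

lemma rank_zero_cols: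
  assumes "B \<subseteq> B'" "finite B'" "\<forall>r\<in>A. \<forall>b\<in>B' - B. M r b = 0"
  shows "rank_mat A B' M = rank_mat A B M"
proof (rule antisym)
  show "rank_mat A B M \<le> rank_mat A B' M" using rank_mono assms by blast
  obtain C where C: "C \<subseteq> B'" "indep_cols A C M" "card C = rank_mat A B' M"
    using rank_mat_obtain[OF assms(2)] by metis
  have fC: "finite C" using C(1) assms(2) finite_subset by blast
  have "C \<subseteq> B"
  proof
    fix b assume "b \<in> C"
    show "b \<in> B"
    proof (rule ccontr)
      assume "b \<notin> B"
      thus False using indep_no_zero_col[OF C(2) \<open>b \<in> C\<close> fC] assms(3) C(1) \<open>b \<in> C\<close> by blast
    qed
  qed
  thus "rank_mat A B' M \<le> rank_mat A B M"
    using rank_mat_ge[of B C A M] C assms finite_subset by metis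
qed

lemma block_le:
  assumes "finite B1" "finite B2" "B1 \<inter> B2 = {}"
    and z: "\<forall>r\<in>A1 \<union> A2. \<forall>b\<in>B1 \<union> B2. M r b \<noteq> 0 \<longrightarrow> (r \<in> A1 \<and> b \<in> B1) \<or> (r \<in> A2 \<and> b \<in> B2)"
  shows "rank_mat (A1 \<union> A2) (B1 \<union> B2) M \<le> rank_mat A1 B1 M + rank_mat A2 B2 M"
proof -
  obtain C where C: "C \<subseteq> B1 \<union> B2" "indep_cols (A1 \<union> A2) C M" "card C = rank_mat (A1 \<union> A2) (B1 \<union> B2) M"
    using rank_mat_obtain[of "B1 \<union> B2"] assms(1,2) by (metis finite_Un)
  have fC: "finite C" using C(1) assms(1,2) finite_subset by blast
  have part: "\<And>Ai Bi Aj Bj. Bi \<inter> Bj = {} \<Longrightarrow> C \<subseteq> Bi \<union> Bj \<Longrightarrow>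
       (\<forall>r\<in>Aj - Ai. \<forall>b\<in>Bi. M r b = 0) \<Longrightarrow> indep_cols (Ai \<union> Aj) C M \<Longrightarrow> indep_cols Ai (C \<inter> Bi) M"
  proof -
    fix Ai Bi Aj Bj assume d: "Bi \<inter> Bj = {}" and sub: "C \<subseteq> Bi \<union> Bj"
      and zz: "\<forall>r\<in>Aj - Ai. \<forall>b\<in>Bi. M r b = 0" and ind: "indep_cols (Ai \<union> Aj) C M"
    show "indep_cols Ai (C \<inter> Bi) M" unfolding indep_cols_def
    proof (intro allI impI)
      fix c assume hc: "\<forall>r\<in>Ai. (\<Sum>b\<in>C \<inter> Bi. c b * M r b) = 0"
      define c' where "c' = (\<lambda>b. if b \<in> Bi then c b else 0)"
      have eq: "\<And>r. (\<Sum>b\<in>C. c' b * M r b) = (\<Sum>b\<in>C \<inter> Bi. c b * M r b)"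
      proof -
        fix r
        have "(\<Sum>b\<in>C. c' b * M r b) = (\<Sum>b\<in>C \<inter> Bi. c' b * M r b)"
          using fC by (intro sum.mono_neutral_right) (auto simp: c'_def)
        also have "\<dots> = (\<Sum>b\<in>C \<inter> Bi. c b * M r b)" by (simp add: c'_def)
        finally show "(\<Sum>b\<in>C. c' b * M r b) = (\<Sum>b\<in>C \<inter> Bi. c b * M r b)" .
      qed
      have "\<forall>r\<in>Ai \<union> Aj. (\<Sum>b\<in>C. c' b * M r b) = 0"
      proof
        fix r assume "r \<in> Ai \<union> Aj"
        show "(\<Sum>b\<in>C. c' b * M r b) = 0"
        proof (cases "r \<in> Ai")
          case True thus ?thesis using eq hc by simp
        next
          case False
          hence "r \<in> Aj - Ai" using \<open>r \<in> Ai \<union> Aj\<close> by blast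
          hence "(\<Sum>b\<in>C \<inter> Bi. c b * M r b) = 0" using zz by (intro sum.neutral) auto
          thus ?thesis using eq by simp
        qed
      qed
      hence "\<forall>b\<in>C. c' b = 0" using ind unfolding indep_cols_def by blast
      thus "\<forall>b\<in>C \<inter> Bi. c b = 0" by (auto simp: c'_def)
    qed
  qed
  have z1: "\<forall>r\<in>A2 - A1. \<forall>b\<in>B1. M r b = 0" using z assms(3) by blast
  have z2: "\<forall>r\<in>A1 - A2. \<forall>b\<in>B2. M r b = 0" using z assms(3) by blast
  have i1: "indep_cols A1 (C \<inter> B1) M" using part[OF assms(3) C(1) z1 C(2)] .
  have i2: "indep_cols A2 (C \<inter> B2) M"
    using part[of B2 B1 A1 A2] assms(3) C(1) z2 C(2) by (metis Int_commute Un_commute)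
  have "card C \<le> card (C \<inter> B1) + card (C \<inter> B2)"
  proof -
    have "C = (C \<inter> B1) \<union> (C \<inter> B2)" using C(1) by blast
    hence "card C \<le> card (C \<inter> B1) + card (C \<inter> B2)" by (metis card_Un_le)
    thus ?thesis .
  qed
  also have "\<dots> \<le> rank_mat A1 B1 M + rank_mat A2 B2 M"
    using rank_mat_ge[OF assms(1) _ i1] rank_mat_ge[OF assms(2) _ i2] by (intro add_mono) auto
  finally show ?thesis using C(3) by simp
qed

lemma block_ge:
  assumes "finite B1" "finite B2" "B1 \<inter> B2 = {}"
    and z1: "\<forall>r\<in>A1. \<forall>b\<in>B2. M r b = 0" and z2: "\<forall>r\<in>A2. \<forall>b\<in>B1. M r b = 0"
  shows "rank_mat A1 B1 M + rank_mat A2 B2 M \<le> rank_mat (A1 \<union> A2) (B1 \<union> B2) M"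
proof -
  obtain C1 where C1: "C1 \<subseteq> B1" "indep_cols A1 C1 M" "card C1 = rank_mat A1 B1 M"
    using rank_mat_obtain[OF assms(1)] by metis
  obtain C2 where C2: "C2 \<subseteq> B2" "indep_cols A2 C2 M" "card C2 = rank_mat A2 B2 M"
    using rank_mat_obtain[OF assms(2)] by metis
  have f1: "finite C1" and f2: "finite C2" using C1 C2 assms finite_subset by blast+
  have dj: "C1 \<inter> C2 = {}" using C1 C2 assms(3) by blast
  have "indep_cols (A1 \<union> A2) (C1 \<union> C2) M" unfolding indep_cols_def
  proof (intro allI impI)
    fix c assume hc: "\<forall>r\<in>A1 \<union> A2. (\<Sum>b\<in>C1 \<union> C2. c b * M r b) = 0"
    have split: "\<And>r. (\<Sum>b\<in>C1 \<union> C2. c b * M r b) = (\<Sum>b\<in>C1. c b * M r b) + (\<Sum>b\<in>C2. c b * M r b)"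
      using sum.union_disjoint[OF f1 f2 dj] by blast
    have "\<forall>r\<in>A1. (\<Sum>b\<in>C1. c b * M r b) = 0"
    proof
      fix r assume r: "r \<in> A1"
      have "(\<Sum>b\<in>C2. c b * M r b) = 0" using z1 r C2(1) by (intro sum.neutral) auto
      thus "(\<Sum>b\<in>C1. c b * M r b) = 0" using hc r split by (metis UnI1 add.right_neutral)
    qed
    hence a: "\<forall>b\<in>C1. c b = 0" using C1(2) unfolding indep_cols_def by blast
    have "\<forall>r\<in>A2. (\<Sum>b\<in>C2. c b * M r b) = 0"
    proof
      fix r assume r: "r \<in> A2"
      have "(\<Sum>b\<in>C1. c b * M r b) = 0" using z2 r C1(1) by (intro sum.neutral) auto
      thus "(\<Sum>b\<in>C2. c b * M r b) = 0" using hc r split by (metis UnI2 add_0)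
    qed
    hence b: "\<forall>b\<in>C2. c b = 0" using C2(2) unfolding indep_cols_def by blast
    show "\<forall>b\<in>C1 \<union> C2. c b = 0" using a b by blast
  qed
  hence "card (C1 \<union> C2) \<le> rank_mat (A1 \<union> A2) (B1 \<union> B2) M"
    using C1(1) C2(1) assms(1,2) by (intro rank_mat_ge) auto
  thus ?thesis using card_Un_disjoint[OF f1 f2 dj] C1(3) C2(3) by simp
qed

lemma rank_unit_rows:
  assumes "finite B" "\<forall>b\<in>B. \<exists>r\<in>A. \<forall>b'\<in>B. M r b' = (if b' = b then 1 else 0)"
  shows "card B \<le> rank_mat A B M"
proof -
  have "indep_cols A B M" unfolding indep_cols_def
  proof (intro allI impI ballI)
    fix c b assume hc: "\<forall>r\<in>A. (\<Sum>b\<in>B. c b * M r b) = 0" and b: "b \<in> B"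
    obtain r where r: "r \<in> A" "\<forall>b'\<in>B. M r b' = (if b' = b then 1 else 0)" using assms(2) b by blast
    have "(\<Sum>b'\<in>B. c b' * M r b') = (\<Sum>b'\<in>B. if b' = b then c b' else 0)"
      using r(2) by (intro sum.cong) auto
    also have "\<dots> = c b" using b assms(1) by (simp add: sum.delta)
    finally show "c b = 0" using hc r(1) by simp
  qed
  thus ?thesis using rank_mat_ge[OF assms(1) order_refl] by blast
qed

definition zs :: "'c set \<Rightarrow> ('c \<Rightarrow> 'a::zero) set" where
  "zs B = {x. \<forall>b. b \<notin> B \<longrightarrow> x b = 0}"

definition kerm :: "'r set \<Rightarrow> 'c set \<Rightarrow> ('r \<Rightarrow> 'c \<Rightarrow> 'a::field) \<Rightarrow> ('c \<Rightarrow> 'a) set" where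
  "kerm A B M = {x \<in> zs B. \<forall>r\<in>A. (\<Sum>b\<in>B. x b * M r b) = 0}"

definition phim :: "'r set \<Rightarrow> 'c set \<Rightarrow> ('r \<Rightarrow> 'c \<Rightarrow> 'a::field) \<Rightarrow> ('c \<Rightarrow> 'a) \<Rightarrow> 'r \<Rightarrow> 'a" where
  "phim A B M x = (\<lambda>r. if r \<in> A then (\<Sum>b\<in>B. x b * M r b) else 0)"

lemma zs_empty: "zs {} = {\<lambda>_. 0}"
  by (auto simp: zs_def)

lemma zs_insert:
  assumes "b \<notin> B"
  shows "zs (insert b B) = (\<lambda>(a, x). x(b := a)) ` (UNIV \<times> zs B)"
proof (intro set_eqI iffI)
  fix x assume "x \<in> zs (insert b B)"
  hence "x = (\<lambda>(a, x). x(b := a)) (x b, x(b := 0))" and "x(b := 0) \<in> zs B"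
    by (auto simp: zs_def)
  thus "x \<in> (\<lambda>(a, x). x(b := a)) ` (UNIV \<times> zs B)" by blast
next
  fix x assume "x \<in> (\<lambda>(a, x). x(b := a)) ` (UNIV \<times> zs B)"
  thus "x \<in> zs (insert b B)" by (auto simp: zs_def)
qed

lemma card_zs:
  assumes "finite B"
  shows "finite (zs B :: ('c \<Rightarrow> 'a::{zero,finite}) set) \<and> card (zs B :: ('c \<Rightarrow> 'a) set) = card (UNIV :: 'a set) ^ card B"
  using assms
proof (induction B rule: finite_induct)
  case empty thus ?case by (simp add: zs_empty)
next
  case (insert b B)
  have inj: "inj_on (\<lambda>(a, x). x(b := a)) ((UNIV::'a set) \<times> (zs B :: ('c \<Rightarrow> 'a) set))"
  proof (rule inj_onI)
    fix p q assume p: "p \<in> UNIV \<times> (zs B :: ('c \<Rightarrow> 'a) set)" and q: "q \<in> UNIV \<times> (zs B :: ('c \<Rightarrow> 'a) set)"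
      and e: "(\<lambda>(a, x). x(b := a)) p = (\<lambda>(a, x). x(b := a)) q"
    obtain a x where px: "p = (a, x)" "x \<in> zs B" using p by auto
    obtain a' x' where qx: "q = (a', x')" "x' \<in> zs B" using q by auto
    have e': "x(b := a) = x'(b := a')" using e px qx by simp
    hence "a = a'" by (metis fun_upd_same)
    moreover have "x = x'"
    proof
      fix c show "x c = x' c"
      proof (cases "c = b")
        case True thus ?thesis using px(2) qx(2) insert.hyps(2) by (simp add: zs_def)
      next
        case False thus ?thesis using e' by (metis fun_upd_other)
      qed
    qed
    ultimately show "p = q" using px qx by simp
  qed
  have "finite ((UNIV::'a set) \<times> (zs B :: ('c \<Rightarrow> 'a) set))" using insert.IH by (intro finite_cartesian_product) simp_all
  hence fin: "finite (zs (insert b B) :: ('c \<Rightarrow> 'a) set)"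
    by (subst zs_insert[OF insert.hyps(2)]) (rule finite_imageI)
  have "card (zs (insert b B) :: ('c \<Rightarrow> 'a) set) = card ((UNIV::'a set) \<times> (zs B :: ('c \<Rightarrow> 'a) set))"
    by (subst zs_insert[OF insert.hyps(2)]) (rule card_image[OF inj])
  also have "\<dots> = card (UNIV :: 'a set) * card (UNIV :: 'a set) ^ card B" using insert.IH by (simp add: card_cartesian_product)
  finally show ?case using fin insert.hyps by simp
qed

lemma card_fibers:
  assumes "finite X" "\<forall>y\<in>f ` X. card {x\<in>X. f x = y} = k"
  shows "card X = card (f ` X) * k"
proof -
  have X: "X = (\<Union>y\<in>f ` X. {x\<in>X. f x = y})" by blast
  have "card X = (\<Sum>y\<in>f ` X. card {x\<in>X. f x = y})"
    by (subst X, rule card_UN_disjoint) (use assms(1) in auto)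
  also have "\<dots> = (\<Sum>y\<in>f ` X. k)" using assms(2) by (intro sum.cong) auto
  finally show ?thesis by simp
qed

lemma subgroup_card:
  fixes H K :: "('c \<Rightarrow> 'b::ab_group_add) set"
  assumes fH: "finite H" and fK: "finite K"
    and cH: "\<forall>x\<in>H. \<forall>y\<in>H. (\<lambda>i. x i - y i) \<in> H" and cK: "\<forall>x\<in>K. \<forall>y\<in>K. (\<lambda>i. x i - y i) \<in> K"
  shows "card H * card K = card {(\<lambda>i. h i + k i) | h k. h \<in> H \<and> k \<in> K} * card (H \<inter> K)"
proof -
  define s where "s = (\<lambda>(h, k) (i::'c). h i + (k i::'b))"
  have im: "s ` (H \<times> K) = {(\<lambda>i. h i + k i) | h k. h \<in> H \<and> k \<in> K}" by (auto simp: s_def)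
  have "\<forall>y\<in>s ` (H \<times> K). card {p\<in>H \<times> K. s p = y} = card (H \<inter> K)"
  proof
    fix y assume "y \<in> s ` (H \<times> K)"
    then obtain h0 k0 where hk: "h0 \<in> H" "k0 \<in> K" "y = (\<lambda>i. h0 i + k0 i)" by (auto simp: s_def)
    have "{p\<in>H \<times> K. s p = y} = (\<lambda>z. ((\<lambda>i. h0 i + z i), (\<lambda>i. k0 i - z i))) ` (H \<inter> K)"
    proof (intro set_eqI iffI)
      fix p assume "p \<in> {p\<in>H \<times> K. s p = y}"
      then obtain h k where p: "p = (h, k)" "h \<in> H" "k \<in> K" "(\<lambda>i. h i + k i) = y" by (auto simp: s_def)
      have "(\<lambda>i. h i - h0 i) \<in> H" using cH p hk by blast
      moreover have "(\<lambda>i. h i - h0 i) = (\<lambda>i. k0 i - k i)" using p(4) hk(3)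
        by (auto simp: fun_eq_iff algebra_simps)
      moreover have "(\<lambda>i. k0 i - k i) \<in> K" using cK p hk by blast
      ultimately have "(\<lambda>i. h i - h0 i) \<in> H \<inter> K" by simp
      moreover have "p = ((\<lambda>i. h0 i + (h i - h0 i)), (\<lambda>i. k0 i - (h i - h0 i)))"
        using p hk \<open>(\<lambda>i. h i - h0 i) = (\<lambda>i. k0 i - k i)\<close> by (simp add: fun_eq_iff algebra_simps)
      ultimately show "p \<in> (\<lambda>z. ((\<lambda>i. h0 i + z i), (\<lambda>i. k0 i - z i))) ` (H \<inter> K)"
        by (intro image_eqI[where x="\<lambda>i. h i - h0 i"]) auto
    next
      fix p assume "p \<in> (\<lambda>z. ((\<lambda>i. h0 i + z i), (\<lambda>i. k0 i - z i))) ` (H \<inter> K)"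
      then obtain z where z: "z \<in> H" "z \<in> K" "p = ((\<lambda>i. h0 i + z i), (\<lambda>i. k0 i - z i))" by blast
      have "(\<lambda>i. h0 i + z i) \<in> H"
      proof -
        have "(\<lambda>i. h0 i - h0 i) \<in> H" using cH hk(1) by blast
        hence z0: "(\<lambda>i. 0) \<in> H" by simp
        have "(\<lambda>i. 0 - z i) \<in> H" using cH[rule_format, OF z0 z(1)] by simp
        from cH[rule_format, OF hk(1) this] show ?thesis by simp
      qed
      moreover have "(\<lambda>i. k0 i - z i) \<in> K" using cK hk(2) z(2) by blast
      ultimately show "p \<in> {p\<in>H \<times> K. s p = y}" using z hk by (auto simp: s_def)
    qed
    moreover have "inj_on (\<lambda>z. ((\<lambda>i. h0 i + z i), (\<lambda>i. k0 i - z i))) (H \<inter> K)"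
      by (rule inj_onI) (simp add: fun_eq_iff)
    ultimately show "card {p\<in>H \<times> K. s p = y} = card (H \<inter> K)" by (simp add: card_image)
  qed
  hence "card (H \<times> K) = card (s ` (H \<times> K)) * card (H \<inter> K)"
    using fH fK by (intro card_fibers) auto
  thus ?thesis using im by (simp add: card_cartesian_product)
qed

lemma sum_diff_mult: "(\<Sum>b\<in>B. (x b - y b) * (m b::'a::field)) = (\<Sum>b\<in>B. x b * m b) - (\<Sum>b\<in>B. y b * m b)"
  by (simp add: algebra_simps sum_subtractf)

lemma sum_add_mult: "(\<Sum>b\<in>B. (x b + y b) * (m b::'a::field)) = (\<Sum>b\<in>B. x b * m b) + (\<Sum>b\<in>B. y b * m b)"
  by (simp add: algebra_simps sum.distrib)

lemma zs_diff: fixes x y :: "'c \<Rightarrow> 'a::ab_group_add" shows "x \<in> zs B \<Longrightarrow> y \<in> zs B \<Longrightarrow> x - y \<in> zs B"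
  by (simp add: zs_def)

lemma zs_add: fixes x y :: "'c \<Rightarrow> 'a::ab_group_add" shows "x \<in> zs B \<Longrightarrow> y \<in> zs B \<Longrightarrow> (\<lambda>i. x i + y i) \<in> zs B"
  by (simp add: zs_def)

lemma kerm_diff:
  assumes "x \<in> kerm A B M" "y \<in> kerm A B M" shows "x - y \<in> kerm A B M"
  using assms by (simp add: kerm_def zs_diff sum_diff_mult)

lemma kerm_zero: "(\<lambda>_. 0) \<in> kerm A B M"
  by (simp add: kerm_def zs_def)

lemma sum_zs_sub:
  fixes x m :: "'c \<Rightarrow> 'a::field"
  assumes "x \<in> zs C" "C \<subseteq> B" "finite B"
  shows "(\<Sum>b\<in>B. x b * m b) = (\<Sum>b\<in>C. x b * m b)"
  using assms by (intro sum.mono_neutral_right) (auto simp: zs_def)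

lemma kerm_fibers:
  fixes M :: "'r \<Rightarrow> 'c \<Rightarrow> 'a::{field,finite}"
  assumes "finite B"
  shows "card (zs B :: ('c \<Rightarrow> 'a) set) = card (phim A B M ` zs B) * card (kerm A B M)"
proof (rule card_fibers)
  show "finite (zs B :: ('c \<Rightarrow> 'a) set)" using card_zs[OF assms] by blast
  show "\<forall>y\<in>phim A B M ` zs B. card {x \<in> zs B. phim A B M x = y} = card (kerm A B M)"
  proof
    fix y assume "y \<in> phim A B M ` zs B"
    then obtain x0 where x0: "x0 \<in> zs B" "y = phim A B M x0" by blast
    have "{x \<in> zs B. phim A B M x = y} = (\<lambda>z i. x0 i + z i) ` kerm A B M"
    proof (intro set_eqI iffI)
      fix x assume "x \<in> {x \<in> zs B. phim A B M x = y}"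
      hence x: "x \<in> zs B" "phim A B M x = phim A B M x0" using x0 by auto
      have "x - x0 \<in> kerm A B M" unfolding kerm_def
      proof (intro CollectI conjI ballI)
        show "x - x0 \<in> zs B" using x(1) x0(1) by (rule zs_diff)
        fix r assume "r \<in> A"
        have "(\<Sum>b\<in>B. x b * M r b) = (\<Sum>b\<in>B. x0 b * M r b)"
          using fun_cong[OF x(2), of r] \<open>r \<in> A\<close> by (simp add: phim_def)
        thus "(\<Sum>b\<in>B. (x - x0) b * M r b) = 0" using sum_diff_mult[of x x0 "M r" B] by simp
      qed
      moreover have "x = (\<lambda>i. x0 i + (x - x0) i)" by simp
      ultimately show "x \<in> (\<lambda>z i. x0 i + z i) ` kerm A B M" by blast
    next
      fix x assume "x \<in> (\<lambda>z i. x0 i + z i) ` kerm A B M"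
      then obtain z where z: "z \<in> kerm A B M" "x = (\<lambda>i. x0 i + z i)" by blast
      have "x \<in> zs B" using z x0 by (auto simp: kerm_def intro: zs_add)
      moreover have "phim A B M x = phim A B M x0"
      proof
        fix r show "phim A B M x r = phim A B M x0 r"
          using z sum_add_mult[of x0 z "M r" B] by (auto simp: phim_def kerm_def)
      qed
      ultimately show "x \<in> {x \<in> zs B. phim A B M x = y}" using x0 by simp
    qed
    moreover have "inj_on (\<lambda>z i. x0 i + z i) (kerm A B M)" by (rule inj_onI) (simp add: fun_eq_iff)
    ultimately show "card {x \<in> zs B. phim A B M x = y} = card (kerm A B M)"
      by (simp add: card_image)
  qed
qed

lemma image_phim:
  fixes M :: "'r \<Rightarrow> 'c \<Rightarrow> 'a::{field,finite}"
  assumes fB: "finite B"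
  shows "card (phim A B M ` zs B) = card (UNIV::'a set) ^ rank_mat A B M"
proof -
  obtain C where C: "C \<subseteq> B" "indep_cols A C M" "card C = rank_mat A B M"
    using rank_mat_obtain[OF fB] by metis
  have fC: "finite C" using C(1) fB finite_subset by blast
  have inj: "inj_on (phim A B M) (zs C)"
  proof (rule inj_onI)
    fix x y assume x: "x \<in> zs C" and y: "y \<in> zs C" and e: "phim A B M x = phim A B M y"
    have "\<forall>r\<in>A. (\<Sum>b\<in>C. (x - y) b * M r b) = 0"
    proof
      fix r assume r: "r \<in> A"
      have "(\<Sum>b\<in>B. x b * M r b) = (\<Sum>b\<in>B. y b * M r b)"
        using fun_cong[OF e, of r] r by (simp add: phim_def)
      hence "(\<Sum>b\<in>C. x b * M r b) = (\<Sum>b\<in>C. y b * M r b)"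
        using sum_zs_sub[OF x C(1) fB] sum_zs_sub[OF y C(1) fB] by simp
      thus "(\<Sum>b\<in>C. (x - y) b * M r b) = 0" using sum_diff_mult[of x y "M r" C] by simp
    qed
    hence "\<forall>b\<in>C. (x - y) b = 0" using C(2) unfolding indep_cols_def by blast
    thus "x = y" using x y by (auto simp: zs_def fun_eq_iff)
  qed
  have dep: "\<forall>b\<in>B - C. \<exists>d\<in>zs C. \<forall>r\<in>A. M r b = (\<Sum>c\<in>C. d c * M r c)"
  proof
    fix b assume b: "b \<in> B - C"
    have "\<not> indep_cols A (insert b C) M"
    proof
      assume "indep_cols A (insert b C) M"
      hence "card (insert b C) \<le> rank_mat A B M" using b C(1) fB by (intro rank_mat_ge) auto
      thus False using b fC C(3) by simp
    qed
    then obtain c where c: "\<forall>r\<in>A. (\<Sum>x\<in>insert b C. c x * M r x) = 0" "\<exists>x\<in>insert b C. c x \<noteq> 0"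
      unfolding indep_cols_def by blast
    have split: "\<And>r. (\<Sum>x\<in>insert b C. c x * M r x) = c b * M r b + (\<Sum>x\<in>C. c x * M r x)"
      using b fC by (simp add: sum.insert)
    have cb: "c b \<noteq> 0"
    proof
      assume "c b = 0"
      hence "\<forall>r\<in>A. (\<Sum>x\<in>C. c x * M r x) = 0" using c(1) split by simp
      hence "\<forall>x\<in>C. c x = 0" using C(2) unfolding indep_cols_def by blast
      thus False using c(2) \<open>c b = 0\<close> by blast
    qed
    define d where "d = (\<lambda>x. if x \<in> C then - c x / c b else 0)"
    have "d \<in> zs C" by (simp add: d_def zs_def)
    moreover have "\<forall>r\<in>A. M r b = (\<Sum>x\<in>C. d x * M r x)"
    proof
      fix r assume r: "r \<in> A"
      have "(\<Sum>x\<in>C. d x * M r x) = (\<Sum>x\<in>C. (- 1 / c b) * (c x * M r x))"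
        by (intro sum.cong) (auto simp: d_def)
      also have "\<dots> = (- 1 / c b) * (\<Sum>x\<in>C. c x * M r x)" by (simp add: sum_distrib_left)
      also have "(\<Sum>x\<in>C. c x * M r x) = - (c b * M r b)" using c(1) r split
        by (metis add_eq_0_iff)
      finally show "M r b = (\<Sum>x\<in>C. d x * M r x)" using cb by simp
    qed
    ultimately show "\<exists>d\<in>zs C. \<forall>r\<in>A. M r b = (\<Sum>c\<in>C. d c * M r c)" by blast
  qed
  then obtain D where D: "\<forall>b\<in>B - C. D b \<in> zs C \<and> (\<forall>r\<in>A. M r b = (\<Sum>c\<in>C. D b c * M r c))"
    by metis
  have eqim: "phim A B M ` zs B = phim A B M ` zs C"
  proof
    show "phim A B M ` zs C \<subseteq> phim A B M ` zs B" using C(1) by (auto simp: zs_def)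
    show "phim A B M ` zs B \<subseteq> phim A B M ` zs C"
    proof
      fix v assume "v \<in> phim A B M ` zs B"
      then obtain x where x: "x \<in> zs B" "v = phim A B M x" by blast
      define y where "y = (\<lambda>c. if c \<in> C then x c + (\<Sum>b\<in>B - C. x b * D b c) else 0)"
      have y: "y \<in> zs C" by (simp add: y_def zs_def)
      have "phim A B M y = phim A B M x"
      proof
        fix r show "phim A B M y r = phim A B M x r"
        proof (cases "r \<in> A")
          case False thus ?thesis by (simp add: phim_def)
        next
          case r: True
          have "(\<Sum>b\<in>B. y b * M r b) = (\<Sum>c\<in>C. y c * M r c)" using sum_zs_sub[OF y C(1) fB] .
          also have "\<dots> = (\<Sum>c\<in>C. x c * M r c + (\<Sum>b\<in>B - C. x b * (D b c * M r c)))"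
            by (intro sum.cong) (auto simp: y_def distrib_right sum_distrib_right mult.assoc)
          also have "\<dots> = (\<Sum>c\<in>C. x c * M r c) + (\<Sum>c\<in>C. \<Sum>b\<in>B - C. x b * (D b c * M r c))"
            by (simp add: sum.distrib)
          also have "(\<Sum>c\<in>C. \<Sum>b\<in>B - C. x b * (D b c * M r c)) = (\<Sum>b\<in>B - C. \<Sum>c\<in>C. x b * (D b c * M r c))"
            by (rule sum.swap)
          also have "\<dots> = (\<Sum>b\<in>B - C. x b * M r b)"
          proof (intro sum.cong refl)
            fix b assume "b \<in> B - C"
            hence "M r b = (\<Sum>c\<in>C. D b c * M r c)" using D r by blast
            thus "(\<Sum>c\<in>C. x b * (D b c * M r c)) = x b * M r b" by (simp add: sum_distrib_left)
          qed
          also have "(\<Sum>c\<in>C. x c * M r c) + (\<Sum>b\<in>B - C. x b * M r b) = (\<Sum>b\<in>B. x b * M r b)"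
            using sum.subset_diff[OF C(1) fB, of "\<lambda>b. x b * M r b"] by simp
          finally show ?thesis using r by (simp add: phim_def)
        qed
      qed
      thus "v \<in> phim A B M ` zs C" using x y by (metis image_eqI)
    qed
  qed
  have "card (phim A B M ` zs B) = card (zs C :: ('c \<Rightarrow> 'a) set)"
    using eqim card_image[OF inj] by simp
  moreover have "card (zs C :: ('c \<Rightarrow> 'a) set) = card (UNIV::'a set) ^ card C" using card_zs[OF fC] by blast
  ultimately show ?thesis using C(3) by simp
qed

lemma kernel_formula:
  fixes M :: "'r \<Rightarrow> 'c \<Rightarrow> 'a::{field,finite}"
  assumes "finite B"
  shows "card (UNIV::'a set) ^ rank_mat A B M * card (kerm A B M) = card (UNIV::'a set) ^ card B"
proof -
  have "card (zs B :: ('c \<Rightarrow> 'a) set) = card (UNIV::'a set) ^ card B" using card_zs[OF assms] by blast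
  thus ?thesis using kerm_fibers[OF assms, of A M] image_phim[OF assms, of A M] by simp
qed

lemma card_field_ge2: "2 \<le> card (UNIV::'a::{field,finite} set)"
proof -
  have "card {0::'a, 1} = 2" by simp
  moreover have "card {0::'a, 1} \<le> card (UNIV::'a set)" by (rule card_mono) auto
  ultimately show ?thesis by simp
qed

lemma finite_kerm:
  fixes M :: "'r \<Rightarrow> 'c \<Rightarrow> 'a::{field,finite}"
  assumes "finite B" shows "finite (kerm A B M)"
proof -
  have "finite (zs B :: ('c \<Rightarrow> 'a) set)" using card_zs[OF assms] by blast
  thus ?thesis unfolding kerm_def by simp
qed

lemma kerm_card_pos:
  fixes M :: "'r \<Rightarrow> 'c \<Rightarrow> 'a::{field,finite}"
  assumes "finite B" shows "0 < card (kerm A B M)"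
  using finite_kerm[OF assms] kerm_zero card_gt_0_iff by blast

lemma rank_cross:
  fixes M :: "'r \<Rightarrow> 'c \<Rightarrow> 'a::{field,finite}"
  assumes f1: "finite B1" and f2: "finite B2"
  shows "rank_mat (A1 \<union> A2) (B1 \<inter> B2) M + rank_mat (A1 \<inter> A2) (B1 \<union> B2) M
         \<le> rank_mat A1 B1 M + rank_mat A2 B2 M"
proof -
  define q where "q = card (UNIV::'a set)"
  have q2: "2 \<le> q" unfolding q_def by (rule card_field_ge2)
  define K1 where "K1 = kerm A1 B1 M"
  define K2 where "K2 = kerm A2 B2 M"
  define K3 where "K3 = kerm (A1 \<union> A2) (B1 \<inter> B2) M"
  define K4 where "K4 = kerm (A1 \<inter> A2) (B1 \<union> B2) M"
  have f3: "finite (B1 \<inter> B2)" and f4: "finite (B1 \<union> B2)" using f1 f2 by auto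
  have fK1: "finite K1" and fK2: "finite K2" and fK3: "finite K3" and fK4: "finite K4"
    unfolding K1_def K2_def K3_def K4_def using finite_kerm f1 f2 f3 f4 by blast+
  have sub3: "K1 \<inter> K2 \<subseteq> K3"
  proof
    fix x assume x: "x \<in> K1 \<inter> K2"
    hence xz: "x \<in> zs (B1 \<inter> B2)" by (auto simp: K1_def K2_def kerm_def zs_def)
    show "x \<in> K3" unfolding K3_def kerm_def
    proof (intro CollectI conjI ballI xz)
      fix r assume r: "r \<in> A1 \<union> A2"
      show "(\<Sum>b\<in>B1 \<inter> B2. x b * M r b) = 0"
      proof (cases "r \<in> A1")
        case True
        have "(\<Sum>b\<in>B1. x b * M r b) = (\<Sum>b\<in>B1 \<inter> B2. x b * M r b)"
          using sum_zs_sub[OF xz _ f1] by blast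
        thus ?thesis using x True by (simp add: K1_def kerm_def)
      next
        case False
        hence r2: "r \<in> A2" using r by blast
        have "(\<Sum>b\<in>B2. x b * M r b) = (\<Sum>b\<in>B1 \<inter> B2. x b * M r b)"
          using sum_zs_sub[OF xz _ f2] by blast
        thus ?thesis using x r2 by (simp add: K2_def kerm_def)
      qed
    qed
  qed
  have sub4: "{(\<lambda>i. h i + k i) | h k. h \<in> K1 \<and> k \<in> K2} \<subseteq> K4"
  proof
    fix z assume "z \<in> {(\<lambda>i. h i + k i) | h k. h \<in> K1 \<and> k \<in> K2}"
    then obtain h k where hk: "z = (\<lambda>i. h i + k i)" "h \<in> K1" "k \<in> K2" by blast
    have hz: "h \<in> zs B1" and kz: "k \<in> zs B2" using hk by (auto simp: K1_def K2_def kerm_def)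
    have hz': "h \<in> zs (B1 \<union> B2)" and kz': "k \<in> zs (B1 \<union> B2)" using hz kz by (auto simp: zs_def)
    show "z \<in> K4" unfolding K4_def kerm_def
    proof (intro CollectI conjI ballI)
      show "z \<in> zs (B1 \<union> B2)" using zs_add[OF hz' kz'] hk(1) by simp
      fix r assume r: "r \<in> A1 \<inter> A2"
      have "(\<Sum>b\<in>B1 \<union> B2. z b * M r b) = (\<Sum>b\<in>B1 \<union> B2. h b * M r b) + (\<Sum>b\<in>B1 \<union> B2. k b * M r b)"
        using hk(1) sum_add_mult[of h k "M r" "B1 \<union> B2"] by simp
      also have "(\<Sum>b\<in>B1 \<union> B2. h b * M r b) = (\<Sum>b\<in>B1. h b * M r b)"
        using sum_zs_sub[OF hz _ f4] by blast
      also have "(\<Sum>b\<in>B1 \<union> B2. k b * M r b) = (\<Sum>b\<in>B2. k b * M r b)"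
        using sum_zs_sub[OF kz _ f4] by blast
      finally show "(\<Sum>b\<in>B1 \<union> B2. z b * M r b) = 0"
        using hk r by (simp add: K1_def K2_def kerm_def)
    qed
  qed
  have cl: "\<And>A B. \<forall>x\<in>kerm A B M. \<forall>y\<in>kerm A B M. (\<lambda>i. x i - y i) \<in> kerm A B M"
  proof (intro ballI)
    fix A B x y assume "x \<in> kerm A B M" "y \<in> kerm A B M"
    hence "x - y \<in> kerm A B M" by (rule kerm_diff)
    moreover have "(\<lambda>i. x i - y i) = x - y" by (simp add: fun_eq_iff)
    ultimately show "(\<lambda>i. x i - y i) \<in> kerm A B M" by simp
  qed
  have "card K1 * card K2 = card {(\<lambda>i. h i + k i) | h k. h \<in> K1 \<and> k \<in> K2} * card (K1 \<inter> K2)"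
    using subgroup_card[OF fK1 fK2] cl unfolding K1_def K2_def by blast
  also have "\<dots> \<le> card K4 * card K3"
    using sub3 sub4 fK3 fK4 by (intro mult_le_mono card_mono) auto
  finally have kk: "card K1 * card K2 \<le> card K3 * card K4" by (simp add: mult.commute)
  define r1 where "r1 = rank_mat A1 B1 M"
  define r2 where "r2 = rank_mat A2 B2 M"
  define r3 where "r3 = rank_mat (A1 \<union> A2) (B1 \<inter> B2) M"
  define r4 where "r4 = rank_mat (A1 \<inter> A2) (B1 \<union> B2) M"
  have e1: "q ^ r1 * card K1 = q ^ card B1" unfolding q_def r1_def K1_def by (rule kernel_formula[OF f1])
  have e2: "q ^ r2 * card K2 = q ^ card B2" unfolding q_def r2_def K2_def by (rule kernel_formula[OF f2])
  have e3: "q ^ r3 * card K3 = q ^ card (B1 \<inter> B2)" unfolding q_def r3_def K3_def by (rule kernel_formula[OF f3])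
  have e4: "q ^ r4 * card K4 = q ^ card (B1 \<union> B2)" unfolding q_def r4_def K4_def by (rule kernel_formula[OF f4])
  have cb: "card (B1 \<union> B2) + card (B1 \<inter> B2) = card B1 + card B2" using card_Un_Int[OF f1 f2] by simp
  have "q ^ (r3 + r4) * (card K3 * card K4) = (q ^ r3 * card K3) * (q ^ r4 * card K4)"
    by (simp add: power_add algebra_simps)
  also have "\<dots> = q ^ (card B1 + card B2)" using e3 e4 cb by (simp add: power_add[symmetric] add.commute)
  also have "\<dots> = (q ^ r1 * card K1) * (q ^ r2 * card K2)" using e1 e2 by (simp add: power_add)
  also have "\<dots> = q ^ (r1 + r2) * (card K1 * card K2)" by (simp add: power_add algebra_simps)
  also have "\<dots> \<le> q ^ (r1 + r2) * (card K3 * card K4)" using kk by simp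
  finally have "q ^ (r3 + r4) \<le> q ^ (r1 + r2)"
    using kerm_card_pos[OF f3, of "A1 \<union> A2" M] kerm_card_pos[OF f4, of "A1 \<inter> A2" M]
    unfolding K3_def K4_def by simp
  hence "r3 + r4 \<le> r1 + r2" using q2 by (simp add: power_increasing_iff)
  thus ?thesis unfolding r1_def r2_def r3_def r4_def .
qed

lemma rank_submod_cols:
  fixes M :: "'r \<Rightarrow> 'c \<Rightarrow> 'a::{field,finite}"
  assumes "finite B1" "finite B2"
  shows "rank_mat A (B1 \<union> B2) M + rank_mat A (B1 \<inter> B2) M \<le> rank_mat A B1 M + rank_mat A B2 M"
  using rank_cross[OF assms, of A A M] by simp

definition mrank :: "'e set \<Rightarrow> ('e set \<Rightarrow> nat) \<Rightarrow> bool" where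
  "mrank E r \<longleftrightarrow> r {} = 0 \<and> (\<forall>X. X \<subseteq> E \<longrightarrow> r X \<le> card X) \<and>
     (\<forall>X Y. X \<subseteq> Y \<longrightarrow> Y \<subseteq> E \<longrightarrow> r X \<le> r Y) \<and>
     (\<forall>X Y. X \<subseteq> E \<longrightarrow> Y \<subseteq> E \<longrightarrow> r (X \<union> Y) + r (X \<inter> Y) \<le> r X + r Y)"

lemma mrank_empty: "mrank E r \<Longrightarrow> r {} = 0" unfolding mrank_def by blast
lemma mrank_card: "mrank E r \<Longrightarrow> X \<subseteq> E \<Longrightarrow> r X \<le> card X" unfolding mrank_def by blast
lemma mrank_mono: "mrank E r \<Longrightarrow> X \<subseteq> Y \<Longrightarrow> Y \<subseteq> E \<Longrightarrow> r X \<le> r Y" unfolding mrank_def by blast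
lemma mrank_submod: "mrank E r \<Longrightarrow> X \<subseteq> E \<Longrightarrow> Y \<subseteq> E \<Longrightarrow> r (X \<union> Y) + r (X \<inter> Y) \<le> r X + r Y"
  unfolding mrank_def by blast

lemma mrank_sub: "mrank E r \<Longrightarrow> E' \<subseteq> E \<Longrightarrow> mrank E' r"
  unfolding mrank_def by (meson order_trans)

lemma mrank_insert:
  assumes "mrank E r" "X \<subseteq> E" "e \<in> E" "e \<notin> X"
  shows "r (insert e X) \<le> r X + r {e}"
proof -
  have "r (X \<union> {e}) + r (X \<inter> {e}) \<le> r X + r {e}" using mrank_submod[OF assms(1,2), of "{e}"] assms(3) by simp
  moreover have "X \<inter> {e} = {}" using assms(4) by blast
  ultimately show ?thesis using mrank_empty[OF assms(1)] by simp
qed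

lemma mrank_contract:
  assumes m: "mrank E r" and e: "e \<in> E" and re: "r {e} = 1"
  shows "mrank (E - {e}) (\<lambda>X. r (insert e X) - 1)"
proof -
  have mono: "\<And>X Y. X \<subseteq> Y \<Longrightarrow> Y \<subseteq> E \<Longrightarrow> r X \<le> r Y" using mrank_mono[OF m] by blast
  have ge1: "\<And>X. X \<subseteq> E - {e} \<Longrightarrow> 1 \<le> r (insert e X)"
  proof -
    fix X assume "X \<subseteq> E - {e}"
    hence "r {e} \<le> r (insert e X)" using e by (intro mono) auto
    thus "1 \<le> r (insert e X)" using re by simp
  qed
  show ?thesis unfolding mrank_def
  proof (intro conjI allI impI)
    show "r (insert e {}) - 1 = 0" using re by simp
  next
    fix X assume X: "X \<subseteq> E - {e}"
    have "r (insert e X) \<le> r X + 1" using mrank_insert[OF m, of X e] X e re by auto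
    moreover have "r X \<le> card X" using mrank_card[OF m] X by auto
    ultimately show "r (insert e X) - 1 \<le> card X" by simp
  next
    fix X Y assume "X \<subseteq> Y" "Y \<subseteq> E - {e}"
    hence "r (insert e X) \<le> r (insert e Y)" using e by (intro mono) auto
    thus "r (insert e X) - 1 \<le> r (insert e Y) - 1" by (rule diff_le_mono)
  next
    fix X Y assume X: "X \<subseteq> E - {e}" and Y: "Y \<subseteq> E - {e}"
    have "r (insert e X \<union> insert e Y) + r (insert e X \<inter> insert e Y) \<le> r (insert e X) + r (insert e Y)"
      using mrank_submod[OF m, of "insert e X" "insert e Y"] X Y e by blast
    moreover have "insert e X \<union> insert e Y = insert e (X \<union> Y)" by blast
    moreover have "insert e X \<inter> insert e Y = insert e (X \<inter> Y)" by blast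
    moreover have "1 \<le> r (insert e (X \<union> Y))" using ge1[of "X \<union> Y"] X Y by simp
    moreover have "1 \<le> r (insert e (X \<inter> Y))" using ge1[of "X \<inter> Y"] X by auto
    ultimately show "r (insert e (X \<union> Y)) - 1 + (r (insert e (X \<inter> Y)) - 1)
        \<le> r (insert e X) - 1 + (r (insert e Y) - 1)" by simp
  qed
qed

theorem matroid_intersection:
  assumes "finite E" "mrank E r1" "mrank E r2" "\<forall>A. A \<subseteq> E \<longrightarrow> k \<le> r1 A + r2 (E - A)"
  shows "\<exists>I. I \<subseteq> E \<and> card I = k \<and> r1 I = card I \<and> r2 I = card I"
  using assms
proof (induction "card E" arbitrary: E r1 r2 k rule: less_induct)
  case less
  note fE = less.prems(1) and m1 = less.prems(2) and m2 = less.prems(3) and h = less.prems(4)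
  show ?case
  proof (cases "k = 0")
    case True
    thus ?thesis using mrank_empty[OF m1] mrank_empty[OF m2] by (intro exI[of _ "{}"]) auto
  next
    case k0: False
    have "E \<noteq> {}"
    proof
      assume "E = {}"
      hence "k \<le> r1 {} + r2 {}" using h by auto
      thus False using mrank_empty[OF m1] mrank_empty[OF m2] k0 by simp
    qed
    then obtain e where e: "e \<in> E" by blast
    define E' where "E' = E - {e}"
    have E'E: "E' \<subseteq> E" and eE': "e \<notin> E'" by (auto simp: E'_def)
      have cE': "card E' < card E" using fE e unfolding E'_def by (rule card_Diff1_less)
    have fE': "finite E'" using fE E'_def by simp
    have m1': "mrank E' r1" and m2': "mrank E' r2" using m1 m2 E'E mrank_sub by blast+
    show ?thesis
    proof (cases "\<forall>A. A \<subseteq> E' \<longrightarrow> k \<le> r1 A + r2 (E' - A)")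
      case True
      from less.hyps[OF cE' fE' m1' m2' True] obtain I where
        "I \<subseteq> E'" "card I = k" "r1 I = card I" "r2 I = card I" by blast
      thus ?thesis using E'E by blast
    next
      case False
      then obtain A where A: "A \<subseteq> E'" "r1 A + r2 (E' - A) < k" using not_le by blast
      have eA: "e \<notin> A" using A(1) eE' by blast
      have A_E: "A \<subseteq> E" using A(1) E'E by blast
      have EA: "E - A = insert e (E' - A)" using e eA by (auto simp: E'_def)
      have r1e: "r1 {e} = 1"
      proof -
        have "r1 {e} \<le> 1" using mrank_card[OF m1, of "{e}"] e by simp
        moreover have "r1 {e} \<noteq> 0"
        proof
          assume z: "r1 {e} = 0"
          have "r1 (insert e A) \<le> r1 A" using mrank_insert[OF m1 A_E e eA] z by simp
          moreover have "k \<le> r1 (insert e A) + r2 (E - insert e A)" using h A_E e by blast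
          moreover have "E - insert e A = E' - A" by (auto simp: E'_def)
          ultimately show False using A(2) by simp
        qed
        ultimately show ?thesis by simp
      qed
      have r2e: "r2 {e} = 1"
      proof -
        have "r2 {e} \<le> 1" using mrank_card[OF m2, of "{e}"] e by simp
        moreover have "r2 {e} \<noteq> 0"
        proof
          assume z: "r2 {e} = 0"
          have "r2 (insert e (E' - A)) \<le> r2 (E' - A)"
            using mrank_insert[OF m2, of "E' - A" e] z e eE' E'E by auto
          moreover have "k \<le> r1 A + r2 (E - A)" using h A_E by blast
          ultimately show False using A(2) EA by simp
        qed
        ultimately show ?thesis by simp
      qed
      define s1 where "s1 = (\<lambda>X. r1 (insert e X) - 1)"
      define s2 where "s2 = (\<lambda>X. r2 (insert e X) - 1)"
      have ms1: "mrank E' s1" unfolding s1_def E'_def by (rule mrank_contract[OF m1 e r1e])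
      have ms2: "mrank E' s2" unfolding s2_def E'_def by (rule mrank_contract[OF m2 e r2e])
      have hc: "\<forall>B. B \<subseteq> E' \<longrightarrow> k - 1 \<le> s1 B + s2 (E' - B)"
      proof (intro allI impI)
        fix B assume B: "B \<subseteq> E'"
        show "k - 1 \<le> s1 B + s2 (E' - B)"
        proof (rule ccontr)
          assume "\<not> k - 1 \<le> s1 B + s2 (E' - B)"
          hence lt: "s1 B + s2 (E' - B) < k - 1" by simp
          have eB: "e \<notin> B" using B eE' by blast
          have B_E: "insert e B \<subseteq> E" using B E'E e by blast
          have g1: "1 \<le> r1 (insert e B)" using mrank_mono[OF m1, of "{e}" "insert e B"] B_E r1e by simp
          have ins: "insert e (E' - B) = E - B" using e eB by (auto simp: E'_def)
          have g2: "1 \<le> r2 (E - B)" using mrank_mono[OF m2, of "{e}" "E - B"] e eB r2e by simp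
          have hB: "r1 (insert e B) + r2 (E - B) \<le> k"
            using lt g1 g2 ins unfolding s1_def s2_def by simp
          have sub1: "r1 (A \<union> insert e B) + r1 (A \<inter> insert e B) \<le> r1 A + r1 (insert e B)"
            using mrank_submod[OF m1 A_E B_E] .
          have sub2: "r2 ((E' - A) \<union> (E - B)) + r2 ((E' - A) \<inter> (E - B)) \<le> r2 (E' - A) + r2 (E - B)"
            using mrank_submod[OF m2, of "E' - A" "E - B"] E'E by blast
          have s_a: "A \<inter> insert e B = A \<inter> B" using eA by blast
          have s_b: "A \<union> insert e B = insert e (A \<union> B)" by blast
          have s_c: "(E' - A) \<union> (E - B) = E - (A \<inter> B)" using e eB by (auto simp: E'_def)
          have s_d: "(E' - A) \<inter> (E - B) = E - insert e (A \<union> B)" by (auto simp: E'_def)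
          have k1: "k \<le> r1 (insert e (A \<union> B)) + r2 (E - insert e (A \<union> B))"
            using h A_E B_E by (meson Un_least insert_subset)
          have k2: "k \<le> r1 (A \<inter> B) + r2 (E - (A \<inter> B))"
            using h A_E by blast
          show False using sub1 sub2 s_a s_b s_c s_d k1 k2 hB A(2) by simp
        qed
      qed
      from less.hyps[OF cE' fE' ms1 ms2 hc] obtain I where
        I: "I \<subseteq> E'" "card I = k - 1" "s1 I = card I" "s2 I = card I" by blast
      have eI: "e \<notin> I" using I(1) eE' by blast
      have fI: "finite I" using I(1) fE' finite_subset by blast
      have cI: "card (insert e I) = k" using I(2) eI fI k0 by simp
      have I_E: "insert e I \<subseteq> E" using I(1) E'E e by blast
      have p1: "1 \<le> r1 (insert e I)" using mrank_mono[OF m1, of "{e}" "insert e I"] I_E r1e by simp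
      have p2: "1 \<le> r2 (insert e I)" using mrank_mono[OF m2, of "{e}" "insert e I"] I_E r2e by simp
      have "r1 (insert e I) = card (insert e I)" using I(3) p1 eI fI unfolding s1_def by simp
      moreover have "r2 (insert e I) = card (insert e I)" using I(4) p2 eI fI unfolding s2_def by simp
      ultimately show ?thesis using cI I_E by blast
    qed
  qed
qed

lemma net_edge:
  assumes "layered_adt_network V E n layer lam S" "((a, i), (b, j)) \<in> E"
  shows "a \<in> V \<and> b \<in> V \<and> i < n \<and> j < n \<and> layer b = Suc (layer a)"
  using assms unfolding layered_adt_network_def by blast

lemma net_finite: "layered_adt_network V E n layer lam S \<Longrightarrow> finite V"
  unfolding layered_adt_network_def by blast

definition emat :: "'a::field itself \<Rightarrow> (('n \<times> 'q) \<times> ('n \<times> 'q)) set \<Rightarrow> ('n \<times> 'q) \<Rightarrow> ('n \<times> 'q) \<Rightarrow> 'a" where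
  "emat F E = (\<lambda>q p. if (p, q) \<in> E then 1 else 0)"

lemma cut_rank_full:
  fixes F :: "'a::{field,finite} itself"
  assumes net: "layered_adt_network V E n layer lam S" and O: "\<Omega> \<subseteq> V"
  shows "cut_rank F E V \<Omega> = rank_mat ((V - \<Omega>) \<times> {..<n}) (\<Omega> \<times> {..<n}) (emat F E)"
proof -
  define rows where "rows = {q. \<exists>p. (p, q) \<in> E \<and> fst p \<in> \<Omega> \<and> fst q \<in> V - \<Omega>}"
  define cols where "cols = {p. \<exists>q. (p, q) \<in> E \<and> fst p \<in> \<Omega> \<and> fst q \<in> V - \<Omega>}"
  have fV: "finite V" using net_finite[OF net] .
  have cr: "cut_rank F E V \<Omega> = rank_mat rows cols (emat F E)"
    unfolding cut_rank_def rows_def cols_def emat_def by simp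
  have rs: "rows \<subseteq> (V - \<Omega>) \<times> {..<n}"
  proof
    fix q assume "q \<in> rows"
    then obtain p where p: "(p, q) \<in> E" "fst q \<in> V - \<Omega>" by (auto simp: rows_def)
    obtain a i b j where "p = (a, i)" "q = (b, j)" by (cases p, cases q) auto
    thus "q \<in> (V - \<Omega>) \<times> {..<n}" using net_edge[OF net] p by auto
  qed
  have cs: "cols \<subseteq> \<Omega> \<times> {..<n}"
  proof
    fix p assume "p \<in> cols"
    then obtain q where p: "(p, q) \<in> E" "fst p \<in> \<Omega>" by (auto simp: cols_def)
    obtain a i b j where "p = (a, i)" "q = (b, j)" by (cases p, cases q) auto
    thus "p \<in> \<Omega> \<times> {..<n}" using net_edge[OF net] p by auto
  qed
  have fo: "finite (\<Omega> \<times> {..<n})" using O fV finite_subset by blast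
  have "rank_mat ((V - \<Omega>) \<times> {..<n}) cols (emat F E) = rank_mat rows cols (emat F E)"
  proof (rule rank_zero_rows[OF rs], intro ballI)
    fix r b assume r: "r \<in> (V - \<Omega>) \<times> {..<n} - rows" and b: "b \<in> cols"
    have "(b, r) \<notin> E"
    proof
      assume "(b, r) \<in> E"
      moreover have "fst b \<in> \<Omega>" using b by (auto simp: cols_def)
      moreover have "fst r \<in> V - \<Omega>" using r by auto
      ultimately have "r \<in> rows" unfolding rows_def by blast
      thus False using r by blast
    qed
    thus "emat F E r b = 0" by (simp add: emat_def)
  qed
  moreover have "rank_mat ((V - \<Omega>) \<times> {..<n}) (\<Omega> \<times> {..<n}) (emat F E) = rank_mat ((V - \<Omega>) \<times> {..<n}) cols (emat F E)"
  proof (rule rank_zero_cols[OF cs fo], intro ballI)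
    fix r b assume r: "r \<in> (V - \<Omega>) \<times> {..<n}" and b: "b \<in> \<Omega> \<times> {..<n} - cols"
    have "(b, r) \<notin> E"
    proof
      assume "(b, r) \<in> E"
      moreover have "fst b \<in> \<Omega>" using b by auto
      moreover have "fst r \<in> V - \<Omega>" using r by auto
      ultimately have "b \<in> cols" unfolding cols_def by blast
      thus False using b by blast
    qed
    thus "emat F E r b = 0" by (simp add: emat_def)
  qed
  ultimately show ?thesis using cr by simp
qed

lemma cut_submod:
  fixes F :: "'a::{field,finite} itself"
  assumes net: "layered_adt_network V E n layer lam S" and O1: "\<Omega>1 \<subseteq> V" and O2: "\<Omega>2 \<subseteq> V"
  shows "cut_rank F E V (\<Omega>1 \<union> \<Omega>2) + cut_rank F E V (\<Omega>1 \<inter> \<Omega>2) \<le> cut_rank F E V \<Omega>1 + cut_rank F E V \<Omega>2"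
proof -
  have fV: "finite V" using net_finite[OF net] .
  have f1: "finite (\<Omega>1 \<times> {..<n})" and f2: "finite (\<Omega>2 \<times> {..<n})"
    using O1 O2 fV finite_subset by blast+
  have "rank_mat ((V - \<Omega>1) \<times> {..<n} \<union> (V - \<Omega>2) \<times> {..<n}) (\<Omega>1 \<times> {..<n} \<inter> \<Omega>2 \<times> {..<n}) (emat F E)
      + rank_mat ((V - \<Omega>1) \<times> {..<n} \<inter> (V - \<Omega>2) \<times> {..<n}) (\<Omega>1 \<times> {..<n} \<union> \<Omega>2 \<times> {..<n}) (emat F E)
      \<le> rank_mat ((V - \<Omega>1) \<times> {..<n}) (\<Omega>1 \<times> {..<n}) (emat F E) + rank_mat ((V - \<Omega>2) \<times> {..<n}) (\<Omega>2 \<times> {..<n}) (emat F E)"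
    by (rule rank_cross[OF f1 f2])
  moreover have "(V - \<Omega>1) \<times> {..<n} \<union> (V - \<Omega>2) \<times> {..<n} = (V - (\<Omega>1 \<inter> \<Omega>2)) \<times> {..<n}" by blast
  moreover have "\<Omega>1 \<times> {..<n} \<inter> \<Omega>2 \<times> {..<n} = (\<Omega>1 \<inter> \<Omega>2) \<times> {..<n}" by blast
  moreover have "(V - \<Omega>1) \<times> {..<n} \<inter> (V - \<Omega>2) \<times> {..<n} = (V - (\<Omega>1 \<union> \<Omega>2)) \<times> {..<n}" by blast
  moreover have "\<Omega>1 \<times> {..<n} \<union> \<Omega>2 \<times> {..<n} = (\<Omega>1 \<union> \<Omega>2) \<times> {..<n}" by blast
  ultimately show ?thesis
    using cut_rank_full[OF net, of _ F] O1 O2 by (simp add: Int_absorb2 le_infI1)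
qed

definition cset :: "'v set \<Rightarrow> ('v \<Rightarrow> nat) \<Rightarrow> nat \<Rightarrow> 'v \<Rightarrow> 'v set set" where
  "cset V layer l S = {\<Omega>. \<Omega> \<subseteq> V \<and> S \<in> \<Omega> \<and> (\<forall>v\<in>V. l + 1 \<le> layer v \<longrightarrow> v \<in> \<Omega>)}"

definition Pset :: "('v \<Rightarrow> nat) \<Rightarrow> nat \<Rightarrow> nat \<Rightarrow> 'v set \<Rightarrow> 'v port set" where
  "Pset layer n l \<Omega> = {OutP v i | v i. v \<in> \<Omega> \<and> layer v = l \<and> i < n}"

definition rho :: "'a::field itself \<Rightarrow> (('v \<times> nat) \<times> ('v \<times> nat)) set \<Rightarrow> 'v set \<Rightarrow> nat \<Rightarrow> ('v \<Rightarrow> nat) \<Rightarrow> nat \<Rightarrow> 'v \<Rightarrow> 'v port set \<Rightarrow> nat" where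
  "rho F E V n layer l S X = Min {cut_rank F E V \<Omega> + card (X \<inter> Pset layer n l \<Omega>) | \<Omega>. \<Omega> \<in> cset V layer l S}"

lemma Pset_Un: "Pset layer n l (A \<union> B) = Pset layer n l A \<union> Pset layer n l B"
  unfolding Pset_def by blast

lemma Pset_Int: "Pset layer n l (A \<inter> B) = Pset layer n l A \<inter> Pset layer n l B"
  unfolding Pset_def by blast

lemma Pset_mono: "A \<subseteq> B \<Longrightarrow> Pset layer n l A \<subseteq> Pset layer n l B"
  unfolding Pset_def by blast

lemma Pset_finite:
  assumes "finite A" shows "finite (Pset layer n l A)"
proof -
  have "Pset layer n l A \<subseteq> (\<lambda>(v, i). OutP v i) ` (A \<times> {..<n})" unfolding Pset_def by auto
  thus ?thesis using assms finite_subset by blast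
qed

lemma cset_finite: "finite V \<Longrightarrow> finite (cset V layer l S)"
  unfolding cset_def by (rule finite_subset[of _ "Pow V"]) auto

lemma cset_V: "S \<in> V \<Longrightarrow> V \<in> cset V layer l S"
  unfolding cset_def by blast

lemma cset_Un: "A \<in> cset V layer l S \<Longrightarrow> B \<in> cset V layer l S \<Longrightarrow> A \<union> B \<in> cset V layer l S"
  unfolding cset_def by blast

lemma cset_Int: "A \<in> cset V layer l S \<Longrightarrow> B \<in> cset V layer l S \<Longrightarrow> A \<inter> B \<in> cset V layer l S"
  unfolding cset_def by blast

lemma cut_rank_V: "cut_rank F E V V = 0"
  unfolding cut_rank_def by simp

lemma rho_set_finite:
  assumes "finite V"
  shows "finite {cut_rank F E V \<Omega> + card (X \<inter> Pset layer n l \<Omega>) | \<Omega>. \<Omega> \<in> cset V layer l S}"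
proof -
  have "{cut_rank F E V \<Omega> + card (X \<inter> Pset layer n l \<Omega>) | \<Omega>. \<Omega> \<in> cset V layer l S}
       = (\<lambda>\<Omega>. cut_rank F E V \<Omega> + card (X \<inter> Pset layer n l \<Omega>)) ` cset V layer l S" by blast
  thus ?thesis using cset_finite[OF assms] by simp
qed

lemma rho_le:
  assumes "finite V" "\<Omega> \<in> cset V layer l S"
  shows "rho F E V n layer l S X \<le> cut_rank F E V \<Omega> + card (X \<inter> Pset layer n l \<Omega>)"
  unfolding rho_def using assms rho_set_finite[OF assms(1)] by (intro Min_le) auto

lemma rho_obtain:
  assumes "finite V" "S \<in> V"
  obtains \<Omega> where "\<Omega> \<in> cset V layer l S" "rho F E V n layer l S X = cut_rank F E V \<Omega> + card (X \<inter> Pset layer n l \<Omega>)"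
proof -
  have ne: "{cut_rank F E V \<Omega> + card (X \<inter> Pset layer n l \<Omega>) | \<Omega>. \<Omega> \<in> cset V layer l S} \<noteq> {}"
    using cset_V[OF assms(2)] by blast
  have "rho F E V n layer l S X \<in> {cut_rank F E V \<Omega> + card (X \<inter> Pset layer n l \<Omega>) | \<Omega>. \<Omega> \<in> cset V layer l S}"
    unfolding rho_def by (rule Min_in[OF rho_set_finite[OF assms(1)] ne])
  then obtain \<Omega> where "\<Omega> \<in> cset V layer l S" "rho F E V n layer l S X = cut_rank F E V \<Omega> + card (X \<inter> Pset layer n l \<Omega>)"
    by blast
  thus ?thesis using that by blast
qed

lemma card_cross_ineq:
  assumes "finite X" "finite Y"
  shows "card ((X \<union> Y) \<inter> (P1 \<inter> P2)) + card ((X \<inter> Y) \<inter> (P1 \<union> P2)) \<le> card (X \<inter> P1) + card (Y \<inter> P2)"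
proof -
  define L1 where "L1 = (X \<union> Y) \<inter> (P1 \<inter> P2)"
  define L2 where "L2 = (X \<inter> Y) \<inter> (P1 \<union> P2)"
  define R1 where "R1 = X \<inter> P1"
  define R2 where "R2 = Y \<inter> P2"
  have fin: "finite L1" "finite L2" "finite R1" "finite R2"
    using assms by (auto simp: L1_def L2_def R1_def R2_def)
  have "card L1 + card L2 = card (L1 \<union> L2) + card (L1 \<inter> L2)" using card_Un_Int[OF fin(1,2)] .
  also have "L1 \<inter> L2 = R1 \<inter> R2" by (auto simp: L1_def L2_def R1_def R2_def)
  also have "card (L1 \<union> L2) \<le> card (R1 \<union> R2)"
    using fin by (intro card_mono) (auto simp: L1_def L2_def R1_def R2_def)
  hence "card (L1 \<union> L2) + card (R1 \<inter> R2) \<le> card (R1 \<union> R2) + card (R1 \<inter> R2)" by simp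
  also have "\<dots> = card R1 + card R2" using card_Un_Int[OF fin(3,4)] by simp
  finally show ?thesis unfolding L1_def L2_def R1_def R2_def .
qed

lemma rho_mrank:
  fixes F :: "'a::{field,finite} itself"
  assumes net: "layered_adt_network V E n layer lam S"
  shows "mrank (Pset layer n l V) (rho F E V n layer l S)"
proof -
  have fV: "finite V" and SV: "S \<in> V" using net unfolding layered_adt_network_def by blast+
  have fE0: "finite (Pset layer n l V)" by (rule Pset_finite[OF fV])
  have csub: "\<And>\<Omega>. \<Omega> \<in> cset V layer l S \<Longrightarrow> \<Omega> \<subseteq> V" unfolding cset_def by blast
  show ?thesis unfolding mrank_def
  proof (intro conjI allI impI)
    have "rho F E V n layer l S {} \<le> cut_rank F E V V + card ({} \<inter> Pset layer n l V)"
      by (rule rho_le[OF fV cset_V[OF SV]])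
    thus "rho F E V n layer l S {} = 0" using cut_rank_V[of F E V] by simp
  next
    fix X assume X: "X \<subseteq> Pset layer n l V"
    have fX: "finite X" using X fE0 finite_subset by blast
    have "rho F E V n layer l S X \<le> cut_rank F E V V + card (X \<inter> Pset layer n l V)"
      by (rule rho_le[OF fV cset_V[OF SV]])
    also have "\<dots> \<le> card X" using cut_rank_V[of F E V] fX by (simp add: card_mono)
    finally show "rho F E V n layer l S X \<le> card X" .
  next
    fix X Y assume XY: "X \<subseteq> Y" and Y: "Y \<subseteq> Pset layer n l V"
    have fY: "finite Y" using Y fE0 finite_subset by blast
    obtain \<Omega> where O: "\<Omega> \<in> cset V layer l S" "rho F E V n layer l S Y = cut_rank F E V \<Omega> + card (Y \<inter> Pset layer n l \<Omega>)"
      using rho_obtain[OF fV SV] by metis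
    have "rho F E V n layer l S X \<le> cut_rank F E V \<Omega> + card (X \<inter> Pset layer n l \<Omega>)"
      by (rule rho_le[OF fV O(1)])
    also have "\<dots> \<le> cut_rank F E V \<Omega> + card (Y \<inter> Pset layer n l \<Omega>)"
      using XY fY by (intro add_left_mono card_mono) auto
    finally show "rho F E V n layer l S X \<le> rho F E V n layer l S Y" using O(2) by simp
  next
    fix X Y assume X: "X \<subseteq> Pset layer n l V" and Y: "Y \<subseteq> Pset layer n l V"
    have fX: "finite X" and fY: "finite Y" using X Y fE0 finite_subset by blast+
    obtain \<Omega>1 where O1: "\<Omega>1 \<in> cset V layer l S" "rho F E V n layer l S X = cut_rank F E V \<Omega>1 + card (X \<inter> Pset layer n l \<Omega>1)"
      using rho_obtain[OF fV SV] by metis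
    obtain \<Omega>2 where O2: "\<Omega>2 \<in> cset V layer l S" "rho F E V n layer l S Y = cut_rank F E V \<Omega>2 + card (Y \<inter> Pset layer n l \<Omega>2)"
      using rho_obtain[OF fV SV] by metis
    have a: "rho F E V n layer l S (X \<union> Y) \<le> cut_rank F E V (\<Omega>1 \<inter> \<Omega>2) + card ((X \<union> Y) \<inter> Pset layer n l (\<Omega>1 \<inter> \<Omega>2))"
      by (rule rho_le[OF fV cset_Int[OF O1(1) O2(1)]])
    have b: "rho F E V n layer l S (X \<inter> Y) \<le> cut_rank F E V (\<Omega>1 \<union> \<Omega>2) + card ((X \<inter> Y) \<inter> Pset layer n l (\<Omega>1 \<union> \<Omega>2))"
      by (rule rho_le[OF fV cset_Un[OF O1(1) O2(1)]])
    have c: "cut_rank F E V (\<Omega>1 \<union> \<Omega>2) + cut_rank F E V (\<Omega>1 \<inter> \<Omega>2) \<le> cut_rank F E V \<Omega>1 + cut_rank F E V \<Omega>2"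
      by (rule cut_submod[OF net csub[OF O1(1)] csub[OF O2(1)]])
    have d: "card ((X \<union> Y) \<inter> (Pset layer n l \<Omega>1 \<inter> Pset layer n l \<Omega>2)) + card ((X \<inter> Y) \<inter> (Pset layer n l \<Omega>1 \<union> Pset layer n l \<Omega>2))
        \<le> card (X \<inter> Pset layer n l \<Omega>1) + card (Y \<inter> Pset layer n l \<Omega>2)"
      by (rule card_cross_ineq[OF fX fY])
    show "rho F E V n layer l S (X \<union> Y) + rho F E V n layer l S (X \<inter> Y) \<le> rho F E V n layer l S X + rho F E V n layer l S Y"
      using a b c d O1(2) O2(2) by (simp add: Pset_Un Pset_Int)
  qed
qed

lemma r2_mrank:
  fixes F :: "'a::{field,finite} itself"
  assumes "finite E0"
  shows "mrank E0 (\<lambda>X. rank_mat W' X (port_inc F E))"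
  unfolding mrank_def
proof (intro conjI allI impI)
  show "rank_mat W' {} (port_inc F E) = 0" by simp
next
  fix X assume "X \<subseteq> E0"
  thus "rank_mat W' X (port_inc F E) \<le> card X" using assms finite_subset rank_mat_le_card by metis
next
  fix X Y assume "X \<subseteq> Y" "Y \<subseteq> E0"
  thus "rank_mat W' X (port_inc F E) \<le> rank_mat W' Y (port_inc F E)"
    using assms finite_subset rank_mono by (metis order_refl)
next
  fix X Y assume "X \<subseteq> E0" "Y \<subseteq> E0"
  hence "finite X" "finite Y" using assms finite_subset by blast+
  thus "rank_mat W' (X \<union> Y) (port_inc F E) + rank_mat W' (X \<inter> Y) (port_inc F E)
        \<le> rank_mat W' X (port_inc F E) + rank_mat W' Y (port_inc F E)"
    by (rule rank_submod_cols)
qed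

lemma minmax_hyp:
  fixes F :: "'a::{field,finite} itself"
  assumes net: "layered_adt_network V E n layer lam S"
    and step1: "\<forall>\<Omega>\<in>cset V layer l S. R \<le> cut_rank F E V \<Omega> + rank_mat W' (Pset layer n l \<Omega>) (port_inc F E)"
    and A: "A \<subseteq> Pset layer n l V"
  shows "R \<le> rho F E V n layer l S A + rank_mat W' (Pset layer n l V - A) (port_inc F E)"
proof -
  have fV: "finite V" and SV: "S \<in> V" using net unfolding layered_adt_network_def by blast+
  obtain \<Omega> where O: "\<Omega> \<in> cset V layer l S" "rho F E V n layer l S A = cut_rank F E V \<Omega> + card (A \<inter> Pset layer n l \<Omega>)"
    using rho_obtain[OF fV SV] by metis
  have OV: "\<Omega> \<subseteq> V" using O(1) unfolding cset_def by blast
  define P where "P = Pset layer n l \<Omega>"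
  have fP: "finite P" unfolding P_def using Pset_finite OV fV finite_subset by blast
  have fPA: "finite (P - A)" "finite (P \<inter> A)" using fP by auto
  have "rank_mat W' P (port_inc F E) \<le> rank_mat W' (P - A) (port_inc F E) + rank_mat W' (P \<inter> A) (port_inc F E)"
    using rank_submod_cols[OF fPA, of W' "port_inc F E"] by (simp add: Un_Diff_Int)
  also have "rank_mat W' (P \<inter> A) (port_inc F E) \<le> card (A \<inter> P)"
    using rank_mat_le_card[OF fPA(2)] by (simp add: Int_commute)
  also have "rank_mat W' (P - A) (port_inc F E) \<le> rank_mat W' (Pset layer n l V - A) (port_inc F E)"
    using Pset_mono[OF OV] Pset_finite[OF fV] unfolding P_def by (intro rank_mono) auto
  finally have "rank_mat W' P (port_inc F E) \<le> rank_mat W' (Pset layer n l V - A) (port_inc F E) + card (A \<inter> P)"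
    by simp
  moreover have "R \<le> cut_rank F E V \<Omega> + rank_mat W' P (port_inc F E)" using step1 O(1) unfolding P_def by blast
  ultimately show ?thesis using O(2) unfolding P_def by simp
qed

lemma mincut_set_finite:
  assumes "finite N"
  shows "finite {cut_rank F E N \<Omega> | \<Omega>. \<Omega> \<subseteq> N \<and> S \<in> \<Omega> \<and> T \<in> N - \<Omega>}"
proof -
  have "{cut_rank F E N \<Omega> | \<Omega>. \<Omega> \<subseteq> N \<and> S \<in> \<Omega> \<and> T \<in> N - \<Omega>} \<subseteq> (\<lambda>\<Omega>. cut_rank F E N \<Omega>) ` Pow N"
    by blast
  thus ?thesis using assms finite_subset by blast
qed

lemma mincut_le:
  assumes "finite N" "\<Omega> \<subseteq> N" "S \<in> \<Omega>" "T \<in> N - \<Omega>"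
  shows "mincut F N E S T \<le> cut_rank F E N \<Omega>"
  unfolding mincut_def using assms by (intro Min_le[OF mincut_set_finite[OF assms(1)]]) blast

lemma mincut_ge:
  assumes "finite N" "S \<in> N" "T \<in> N" "S \<noteq> T"
    and "\<forall>\<Omega>. \<Omega> \<subseteq> N \<and> S \<in> \<Omega> \<and> T \<in> N - \<Omega> \<longrightarrow> k \<le> cut_rank F E N \<Omega>"
  shows "k \<le> mincut F N E S T"
proof -
  have ne: "{cut_rank F E N \<Omega> | \<Omega>. \<Omega> \<subseteq> N \<and> S \<in> \<Omega> \<and> T \<in> N - \<Omega>} \<noteq> {}"
    using assms(2,3,4) by (intro ex_in_conv[THEN iffD1] exI[of _ "cut_rank F E N {S}"]) blast
  show ?thesis unfolding mincut_def using assms(5)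
    by (subst Min_ge_iff[OF mincut_set_finite[OF assms(1)] ne]) blast
qed

lemma vs_mem:
  "(p, q) \<in> vsink_edges E W \<longleftrightarrow>
    (\<exists>a i b j. p = (Some a, Inr i) \<and> q = (Some b, Inr j) \<and> ((a, i), (b, j)) \<in> E \<and>
        \<not> ((\<exists>j'. InP b j' \<in> W) \<and> InP b j \<notin> W))
  \<or> (\<exists>v i. p = (Some v, Inr i) \<and> q = (None, Inl (OutP v i)) \<and> OutP v i \<in> W)
  \<or> (\<exists>v j. p = (Some v, Inr (card {j'. InP v j' \<in> W \<and> j' < j})) \<and> q = (None, Inl (InP v j)) \<and> InP v j \<in> W)"
  unfolding vsink_edges_def by blast

lemma vs_mem_some:
  "((Some a, Inr i), (Some b, Inr j)) \<in> vsink_edges E W \<longleftrightarrow>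
     ((a, i), (b, j)) \<in> E \<and> \<not> ((\<exists>j'. InP b j' \<in> W) \<and> InP b j \<notin> W)"
  unfolding vs_mem by blast

fun pidx :: "'v port \<Rightarrow> nat" where
  "pidx (OutP v i) = i"
| "pidx (InP v j) = j"

definition pemb :: "'v port \<Rightarrow> 'v option \<times> ('v port + nat)" where
  "pemb w = (Some (port_node w), Inr (pidx w))"

definition hemb :: "'v \<times> nat \<Rightarrow> 'v option \<times> ('v port + nat)" where
  "hemb p = (Some (fst p), Inr (snd p))"

lemma inj_hemb: "inj hemb"
  by (rule injI) (auto simp: hemb_def prod_eq_iff)

lemma inj_pemb_In: "\<forall>w\<in>W. \<exists>v j. w = InP v j \<Longrightarrow> inj_on pemb W"
proof (rule inj_onI)
  fix x y assume h: "\<forall>w\<in>W. \<exists>v j. w = InP v j" "x \<in> W" "y \<in> W" "pemb x = pemb y"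
  then obtain v j v' j' where "x = InP v j" "y = InP v' j'" by blast
  thus "x = y" using h(4) by (simp add: pemb_def)
qed

lemma inj_pemb_Out: "\<forall>w\<in>W. \<exists>v j. w = OutP v j \<Longrightarrow> inj_on pemb W"
proof (rule inj_onI)
  fix x y assume h: "\<forall>w\<in>W. \<exists>v j. w = OutP v j" "x \<in> W" "y \<in> W" "pemb x = pemb y"
  then obtain v j v' j' where "x = OutP v j" "y = OutP v' j'" by blast
  thus "x = y" using h(4) by (simp add: pemb_def)
qed

lemma hemb_pemb_In: "pemb (InP b j) = hemb (b, j)" by (simp add: pemb_def hemb_def)
lemma hemb_pemb_Out: "pemb (OutP b j) = hemb (b, j)" by (simp add: pemb_def hemb_def)
lemma hemb_eq: "hemb (a, i) = hemb (b, j) \<longleftrightarrow> a = b \<and> i = j" by (simp add: hemb_def)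

lemma step1:
  fixes F :: "'a::{field,finite} itself"
  assumes net: "layered_adt_network V E n layer lam S"
    and l1: "1 \<le> l"
    and reg: "regular F V E n layer S R W'"
    and Win: "\<forall>w\<in>W'. \<exists>v j. w = InP v j \<and> layer v = l + 1"
    and O: "\<Omega> \<in> cset V layer l S"
  shows "R \<le> cut_rank F E V \<Omega> + rank_mat W' (Pset layer n l \<Omega>) (port_inc F E)"
proof -
  have fV: "finite V" and SV: "S \<in> V" and lS: "layer S = 1"
    using net unfolding layered_adt_network_def by blast+
  have adm: "admissible_ports V n layer W'" and mc: "mincut F (insert None (Some ` V)) (vsink_edges E W') (Some S) None = R"
    using reg unfolding regular_def by blast+
  have fW: "finite W'" using adm unfolding admissible_ports_def by blast
  have WV: "\<And>v j. InP v j \<in> W' \<Longrightarrow> v \<in> V \<and> j < n" using adm unfolding admissible_ports_def by blast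
  have OV: "\<Omega> \<subseteq> V" and SO: "S \<in> \<Omega>" and Oup: "\<And>v. v \<in> V \<Longrightarrow> l + 1 \<le> layer v \<Longrightarrow> v \<in> \<Omega>"
    using O unfolding cset_def by blast+
  define U where "U = {v. \<exists>j. InP v j \<in> W'}"
  have Ul: "\<And>v. v \<in> U \<Longrightarrow> v \<in> V \<and> layer v = l + 1"
  proof -
    fix v assume "v \<in> U"
    then obtain j where j: "InP v j \<in> W'" by (auto simp: U_def)
    then obtain v' j' where "InP v j = InP v' j'" "layer v' = l + 1" using Win by blast
    thus "v \<in> V \<and> layer v = l + 1" using WV[OF j] by simp
  qed
  have noOut: "\<And>v i. OutP v i \<notin> W'" using Win by blast
  define ED where "ED = vsink_edges E W'"
  define N' where "N' = insert None (Some ` V)"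
  define \<Omega>' where "\<Omega>' = Some ` (\<Omega> - U)"
  have fN: "finite N'" using fV by (simp add: N'_def)
  have SU: "S \<notin> U" using Ul lS l1 by fastforce
  have hR: "R \<le> cut_rank F ED N' \<Omega>'"
    using mincut_le[OF fN, of \<Omega>' "Some S" None F ED] mc SO SU OV
    unfolding N'_def \<Omega>'_def ED_def by auto
  define P where "P = Pset layer n l \<Omega>"
  define rowsC where "rowsC = {q. \<exists>p. (p, q) \<in> E \<and> fst p \<in> \<Omega> \<and> fst q \<in> V - \<Omega>}"
  define colsC where "colsC = {p. \<exists>q. (p, q) \<in> E \<and> fst p \<in> \<Omega> \<and> fst q \<in> V - \<Omega>}"
  define rowsX where "rowsX = {q. \<exists>p. (p, q) \<in> ED \<and> fst p \<in> \<Omega>' \<and> fst q \<in> N' - \<Omega>'}"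
  define colsX where "colsX = {p. \<exists>q. (p, q) \<in> ED \<and> fst p \<in> \<Omega>' \<and> fst q \<in> N' - \<Omega>'}"
  define A1 where "A1 = hemb ` rowsC"
  define B1 where "B1 = hemb ` colsC"
  define A2 where "A2 = pemb ` W'"
  define B2 where "B2 = pemb ` P"
  have cutX: "cut_rank F ED N' \<Omega>' = rank_mat rowsX colsX (emat F ED)"
    unfolding cut_rank_def rowsX_def colsX_def emat_def by simp
  have ef: "\<And>p q. (p, q) \<in> ED \<Longrightarrow> fst p \<in> \<Omega>' \<Longrightarrow> fst q \<in> N' - \<Omega>' \<Longrightarrow>
     (\<exists>a i b j. p = hemb (a, i) \<and> q = hemb (b, j) \<and> ((a, i), (b, j)) \<in> E \<and> a \<in> \<Omega> \<and>
        ((b \<notin> \<Omega> \<and> (a, i) \<in> colsC \<and> (b, j) \<in> rowsC) \<or> (InP b j \<in> W' \<and> OutP a i \<in> P)))"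
  proof -
    fix p q assume e: "(p, q) \<in> ED" and fp: "fst p \<in> \<Omega>'" and fq: "fst q \<in> N' - \<Omega>'"
    from e[unfolded ED_def vs_mem] show "?thesis p q"
    proof (elim disjE exE conjE)
      fix a i b j assume p: "p = (Some a, Inr i)" and q: "q = (Some b, Inr j)"
        and E1: "((a, i), (b, j)) \<in> E" and keep: "\<not> ((\<exists>j'. InP b j' \<in> W') \<and> InP b j \<notin> W')"
      have aO: "a \<in> \<Omega> - U" using fp p by (auto simp: \<Omega>'_def)
      have bO: "b \<notin> \<Omega> - U" using fq q by (auto simp: \<Omega>'_def)
      have ne: "a \<in> V \<and> b \<in> V \<and> i < n \<and> j < n \<and> layer b = Suc (layer a)" using net_edge[OF net E1] .
      show ?thesis
      proof (cases "b \<in> U")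
        case True
        hence W1: "InP b j \<in> W'" using keep by (auto simp: U_def)
        have "layer b = l + 1" using Ul[OF True] by simp
        hence "layer a = l" using ne by simp
        hence "OutP a i \<in> P" using aO ne by (auto simp: P_def Pset_def)
        thus ?thesis using p q E1 aO W1 by (auto simp: hemb_def)
      next
        case False
        hence bO': "b \<notin> \<Omega>" using bO by blast
        have "(a, i) \<in> colsC" unfolding colsC_def using E1 aO bO' ne by force
        moreover have "(b, j) \<in> rowsC" unfolding rowsC_def using E1 aO bO' ne by force
        ultimately show ?thesis using p q E1 aO bO' by (auto simp: hemb_def)
      qed
    next
      fix v i assume "OutP v i \<in> W'" thus ?thesis using noOut by blast
    next
      fix v j assume p: "p = (Some v, Inr (card {j'. InP v j' \<in> W' \<and> j' < j}))" and "InP v j \<in> W'"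
      hence "v \<in> U" by (auto simp: U_def)
      hence "fst p \<notin> \<Omega>'" using p by (auto simp: \<Omega>'_def)
      thus ?thesis using fp by blast
    qed
  qed
  have rowsX_sub: "rowsX \<subseteq> A1 \<union> A2"
  proof
    fix q assume "q \<in> rowsX"
    then obtain p where "(p, q) \<in> ED" "fst p \<in> \<Omega>'" "fst q \<in> N' - \<Omega>'" by (auto simp: rowsX_def)
    from ef[OF this] obtain a i b j where h: "q = hemb (b, j)"
      "(b, j) \<in> rowsC \<or> InP b j \<in> W'" by blast
    thus "q \<in> A1 \<union> A2" unfolding A1_def A2_def using hemb_pemb_In[of b j] by (metis UnI1 UnI2 image_eqI)
  qed
  have colsX_sub: "colsX \<subseteq> B1 \<union> B2"
  proof
    fix p assume "p \<in> colsX"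
    then obtain q where "(p, q) \<in> ED" "fst p \<in> \<Omega>'" "fst q \<in> N' - \<Omega>'" by (auto simp: colsX_def)
    from ef[OF this] obtain a i b j where h: "p = hemb (a, i)"
      "(a, i) \<in> colsC \<or> OutP a i \<in> P" by blast
    thus "p \<in> B1 \<union> B2" unfolding B1_def B2_def using hemb_pemb_Out[of a i] by (metis UnI1 UnI2 image_eqI)
  qed
  have colsC_layer: "\<And>a i. (a, i) \<in> colsC \<Longrightarrow> layer a < l \<and> a \<in> \<Omega>"
  proof -
    fix a i assume "(a, i) \<in> colsC"
    then obtain b j where E1: "((a, i), (b, j)) \<in> E" and aO: "a \<in> \<Omega>" and bO: "b \<in> V - \<Omega>"
      unfolding colsC_def by auto
    have "layer b < l + 1" using Oup bO by (meson DiffD1 DiffD2 not_le)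
    thus "layer a < l \<and> a \<in> \<Omega>" using net_edge[OF net E1] aO by simp
  qed
  have rowsC_layer: "\<And>b j. (b, j) \<in> rowsC \<Longrightarrow> layer b < l + 1 \<and> b \<in> V - \<Omega>"
  proof -
    fix b j assume "(b, j) \<in> rowsC"
    hence bO: "b \<in> V - \<Omega>" unfolding rowsC_def by auto
    thus "layer b < l + 1 \<and> b \<in> V - \<Omega>" using Oup by (meson DiffD1 DiffD2 not_le)
  qed
  have P_layer: "\<And>w. w \<in> P \<Longrightarrow> \<exists>a i. w = OutP a i \<and> layer a = l" unfolding P_def Pset_def by blast
  have fcolsC: "finite colsC"
  proof -
    have "colsC \<subseteq> V \<times> {..<n}"
    proof
      fix p assume "p \<in> colsC"
      then obtain q where "(p, q) \<in> E" unfolding colsC_def by blast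
      thus "p \<in> V \<times> {..<n}" using net_edge[OF net] by (cases p, cases q) blast
    qed
    thus ?thesis using fV finite_subset by blast
  qed
  have fP: "finite P" unfolding P_def using Pset_finite[of \<Omega>] OV fV finite_subset by blast
  have fB1: "finite B1" and fB2: "finite B2" using fcolsC fP by (auto simp: B1_def B2_def)
  have B1_form: "\<And>x. x \<in> B1 \<Longrightarrow> \<exists>a i. x = hemb (a, i) \<and> layer a < l"
    unfolding B1_def using colsC_layer by fastforce
  have B2_form: "\<And>x. x \<in> B2 \<Longrightarrow> \<exists>a i. x = hemb (a, i) \<and> layer a = l"
    unfolding B2_def using P_layer hemb_pemb_Out by fastforce
  have A1_form: "\<And>x. x \<in> A1 \<Longrightarrow> \<exists>b j. x = hemb (b, j) \<and> layer b < l + 1"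
    unfolding A1_def using rowsC_layer by fastforce
  have A2_form: "\<And>x. x \<in> A2 \<Longrightarrow> \<exists>b j. x = hemb (b, j) \<and> layer b = l + 1"
  proof -
    fix x assume "x \<in> A2"
    then obtain w where w: "w \<in> W'" "x = pemb w" unfolding A2_def by blast
    then obtain v j where "w = InP v j" "layer v = l + 1" using Win by blast
    thus "\<exists>b j. x = hemb (b, j) \<and> layer b = l + 1" using w hemb_pemb_In by metis
  qed
  have disj: "B1 \<inter> B2 = {}"
  proof (rule ccontr)
    assume "B1 \<inter> B2 \<noteq> {}"
    then obtain x where "x \<in> B1" "x \<in> B2" by blast
    then obtain a i a' i' where "x = hemb (a, i)" "layer a < l" "x = hemb (a', i')" "layer a' = l"
      using B1_form B2_form by metis
    thus False using hemb_eq by (metis less_irrefl)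
  qed
  have zero: "\<forall>r\<in>A1 \<union> A2. \<forall>b\<in>B1 \<union> B2. emat F ED r b \<noteq> 0 \<longrightarrow> (r \<in> A1 \<and> b \<in> B1) \<or> (r \<in> A2 \<and> b \<in> B2)"
  proof (intro ballI impI)
    fix r b assume r: "r \<in> A1 \<union> A2" and b: "b \<in> B1 \<union> B2" and nz: "emat F ED r b \<noteq> 0"
    have bED: "(b, r) \<in> ED" using nz by (simp add: emat_def split: if_splits)
    obtain b' j where rr: "r = hemb (b', j)" using r A1_form A2_form by blast
    obtain a i where bb: "b = hemb (a, i)" using b B1_form B2_form by blast
    have "((a, i), (b', j)) \<in> E" using bED rr bb unfolding ED_def hemb_def by (simp add: vs_mem_some)
    hence lay: "layer b' = Suc (layer a)" using net_edge[OF net] by blast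
    have la: "layer a < l \<longleftrightarrow> b \<in> B1"
    proof
      assume "layer a < l"
      thus "b \<in> B1" using b B2_form bb hemb_eq by (metis UnE less_irrefl)
    next
      assume "b \<in> B1"
      thus "layer a < l" using B1_form bb hemb_eq by metis
    qed
    have lb: "layer b' < l + 1 \<longleftrightarrow> r \<in> A1"
    proof
      assume "layer b' < l + 1"
      thus "r \<in> A1" using r A2_form rr hemb_eq by (metis UnE less_irrefl)
    next
      assume "r \<in> A1"
      thus "layer b' < l + 1" using A1_form rr hemb_eq by metis
    qed
    show "(r \<in> A1 \<and> b \<in> B1) \<or> (r \<in> A2 \<and> b \<in> B2)"
      using la lb lay r b by auto
  qed
  have r1: "rank_mat A1 B1 (emat F ED) = cut_rank F E V \<Omega>"
  proof -
    have "rank_mat A1 B1 (emat F ED) = rank_mat rowsC colsC (\<lambda>q p. emat F ED (hemb q) (hemb p))"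
      unfolding A1_def B1_def by (rule rank_reindex[OF inj_on_subset[OF inj_hemb subset_UNIV] fcolsC])
    also have "\<dots> = rank_mat rowsC colsC (emat F E)"
    proof (rule rank_cong, intro ballI)
      fix q p assume q: "q \<in> rowsC" and p: "p \<in> colsC"
      obtain b j where qq: "q = (b, j)" by (cases q)
      obtain a i where pp: "p = (a, i)" by (cases p)
      have "b \<notin> U" using rowsC_layer[of b j] q qq Ul by fastforce
      hence "(hemb p, hemb q) \<in> ED \<longleftrightarrow> (p, q) \<in> E"
        using qq pp unfolding ED_def hemb_def by (auto simp: vs_mem_some U_def)
      thus "emat F ED (hemb q) (hemb p) = emat F E q p" by (simp add: emat_def)
    qed
    also have "\<dots> = cut_rank F E V \<Omega>" unfolding cut_rank_def rowsC_def colsC_def emat_def by simp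
    finally show ?thesis .
  qed
  have r2: "rank_mat A2 B2 (emat F ED) = rank_mat W' P (port_inc F E)"
  proof -
    have ij: "inj_on pemb P" by (rule inj_pemb_Out) (use P_layer in blast)
    have "rank_mat A2 B2 (emat F ED) = rank_mat W' P (\<lambda>q p. emat F ED (pemb q) (pemb p))"
      unfolding A2_def B2_def by (rule rank_reindex[OF ij fP])
    also have "\<dots> = rank_mat W' P (port_inc F E)"
    proof (rule rank_cong, intro ballI)
      fix w' w assume w': "w' \<in> W'" and w: "w \<in> P"
      obtain b j where ww': "w' = InP b j" using Win w' by blast
      obtain a i where ww: "w = OutP a i" using P_layer w by blast
      have "(pemb w, pemb w') \<in> ED \<longleftrightarrow> ((a, i), (b, j)) \<in> E"
        using ww ww' w' unfolding ED_def pemb_def by (auto simp: vs_mem_some)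
      thus "emat F ED (pemb w') (pemb w) = port_inc F E w' w" using ww ww' by (simp add: emat_def)
    qed
    finally show ?thesis .
  qed
  have "cut_rank F ED N' \<Omega>' \<le> rank_mat (A1 \<union> A2) (B1 \<union> B2) (emat F ED)"
    unfolding cutX using rowsX_sub colsX_sub fB1 fB2 by (intro rank_mono) auto
  also have "\<dots> \<le> rank_mat A1 B1 (emat F ED) + rank_mat A2 B2 (emat F ED)"
    by (rule block_le[OF fB1 fB2 disj zero])
  finally show ?thesis using hR r1 r2 unfolding P_def by simp
qed

lemma step2:
  fixes F :: "'a::{field,finite} itself" and V :: "'v set"
  assumes net: "layered_adt_network V E n layer lam S"
    and WE0: "W \<subseteq> Pset layer n l V" and cW: "card W = R"
    and hyp: "\<forall>\<Omega>\<in>cset V layer l S. R \<le> cut_rank F E V \<Omega> + card (W \<inter> Pset layer n l \<Omega>)"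
  shows "regular F V E n layer S R W"
proof -
  have fV: "finite V" and SV: "S \<in> V" using net unfolding layered_adt_network_def by blast+
  have fW: "finite W" using WE0 Pset_finite[OF fV] finite_subset by blast
  have Wform: "\<And>w. w \<in> W \<Longrightarrow> \<exists>v i. w = OutP v i \<and> v \<in> V \<and> layer v = l \<and> i < n"
    using WE0 unfolding Pset_def by blast
  have noIn: "\<And>v j. InP v j \<notin> W" using Wform by blast
  have adm: "admissible_ports V n layer W"
    unfolding admissible_ports_def
  proof (intro conjI allI impI)
    show "finite W" by (rule fW)
    fix v i assume "OutP v i \<in> W" thus "v \<in> V" "i < n" using Wform by blast+
  next
    fix v j assume "InP v j \<in> W" thus "v \<in> V" "j < n" using noIn by blast+
  next
    show "\<exists>l. \<forall>w\<in>W. layer (port_node w) = l" using Wform by (intro exI[of _ l]) fastforce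
  next
    show "\<not> (\<exists>v i j. OutP v i \<in> W \<and> InP v j \<in> W)" using noIn by blast
  qed
  define ED where "ED = vsink_edges E W"
  define N where "N = insert None (Some ` V)"
  have fN: "finite N" using fV by (simp add: N_def)
  have keepall: "\<And>a i b j. ((Some a, Inr i), (Some b, Inr j)) \<in> ED \<longleftrightarrow> ((a, i), (b, j)) \<in> E"
    unfolding ED_def using noIn by (simp add: vs_mem_some)
  have toNone: "\<And>p w. (p, (None, Inl w)) \<in> ED \<longleftrightarrow> w \<in> W \<and> p = pemb w"
  proof -
    fix p w
    show "(p, (None, Inl w)) \<in> ED \<longleftrightarrow> w \<in> W \<and> p = pemb w"
    proof
      assume "(p, (None, Inl w)) \<in> ED"
      thus "w \<in> W \<and> p = pemb w" unfolding ED_def vs_mem using noIn by (auto simp: pemb_def)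
    next
      assume h: "w \<in> W \<and> p = pemb w"
      then obtain v i where "w = OutP v i" using Wform by blast
      thus "(p, (None, Inl w)) \<in> ED" using h unfolding ED_def vs_mem by (auto simp: pemb_def)
    qed
  qed
  have src: "\<And>p q. (p, q) \<in> ED \<Longrightarrow> p \<in> hemb ` (V \<times> {..<n})"
  proof -
    fix p q assume "(p, q) \<in> ED"
    thus "p \<in> hemb ` (V \<times> {..<n})" unfolding ED_def vs_mem
    proof (elim disjE exE conjE)
      fix a i b j assume "p = (Some a, Inr i)" "((a, i), (b, j)) \<in> E"
      thus ?thesis using net_edge[OF net] by (force simp: hemb_def)
    next
      fix v i assume "p = (Some v, Inr i)" "OutP v i \<in> W"
      thus ?thesis using Wform by (force simp: hemb_def)
    next
      fix v j assume "InP v j \<in> W" thus ?thesis using noIn by blast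
    qed
  qed
  have le: "mincut F N ED (Some S) None \<le> R"
  proof -
    have "mincut F N ED (Some S) None \<le> cut_rank F ED N (Some ` V)"
      using SV by (intro mincut_le[OF fN]) (auto simp: N_def)
    also have "cut_rank F ED N (Some ` V) \<le> R"
    proof -
      define colsX where "colsX = {p. \<exists>q. (p, q) \<in> ED \<and> fst p \<in> Some ` V \<and> fst q \<in> N - Some ` V}"
      have sub: "colsX \<subseteq> pemb ` W"
      proof
        fix p assume "p \<in> colsX"
        then obtain q where q: "(p, q) \<in> ED" "fst q \<in> N - Some ` V" unfolding colsX_def by blast
        have "fst q = None" using q(2) by (auto simp: N_def)
        then obtain x where qx: "q = (None, x)" by (cases q) auto
        have "\<exists>w. x = Inl w"
        proof (cases x)
          case (Inr k)
          thus ?thesis using q(1) qx unfolding ED_def vs_mem by auto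
        qed auto
        then obtain w where "x = Inl w" by blast
        thus "p \<in> pemb ` W" using q(1) qx toNone by blast
      qed
      have fc: "finite (pemb ` W)" using fW by simp
      have "cut_rank F ED N (Some ` V) = rank_mat {q. \<exists>p. (p, q) \<in> ED \<and> fst p \<in> Some ` V \<and> fst q \<in> N - Some ` V} colsX (emat F ED)"
        unfolding cut_rank_def colsX_def emat_def by simp
      also have "\<dots> \<le> card colsX" by (rule rank_mat_le_card[OF finite_subset[OF sub fc]])
      also have "\<dots> \<le> card (pemb ` W)" using card_mono[OF fc sub] .
      also have "\<dots> \<le> card W" by (rule card_image_le[OF fW])
      finally show ?thesis using cW by simp
    qed
    finally show ?thesis .
  qed
  have ge: "R \<le> mincut F N ED (Some S) None"
  proof (rule mincut_ge[OF fN])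
    show "Some S \<in> N" "None \<in> N" "Some S \<noteq> None" using SV by (auto simp: N_def)
    show "\<forall>\<Omega>''. \<Omega>'' \<subseteq> N \<and> Some S \<in> \<Omega>'' \<and> None \<in> N - \<Omega>'' \<longrightarrow> R \<le> cut_rank F ED N \<Omega>''"
    proof (intro allI impI, elim conjE)
      fix \<Omega>'' assume O1: "\<Omega>'' \<subseteq> N" and O2: "Some S \<in> \<Omega>''" and O3: "None \<in> N - \<Omega>''"
      define \<Omega> where "\<Omega> = {v \<in> V. Some v \<in> \<Omega>'' \<or> l + 1 \<le> layer v}"
      have Oc: "\<Omega> \<in> cset V layer l S" using O2 SV unfolding \<Omega>_def cset_def by auto
      have inO: "\<And>v. v \<in> \<Omega> \<Longrightarrow> layer v < l + 1 \<Longrightarrow> Some v \<in> \<Omega>''" unfolding \<Omega>_def by auto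
      have outO: "\<And>v. v \<in> V - \<Omega> \<Longrightarrow> Some v \<notin> \<Omega>'' \<and> layer v < l + 1" unfolding \<Omega>_def by auto
      define P where "P = Pset layer n l \<Omega>"
      define rowsC where "rowsC = {q. \<exists>p. (p, q) \<in> E \<and> fst p \<in> \<Omega> \<and> fst q \<in> V - \<Omega>}"
      define colsC where "colsC = {p. \<exists>q. (p, q) \<in> E \<and> fst p \<in> \<Omega> \<and> fst q \<in> V - \<Omega>}"
      define rowsX where "rowsX = {q. \<exists>p. (p, q) \<in> ED \<and> fst p \<in> \<Omega>'' \<and> fst q \<in> N - \<Omega>''}"
      define colsX where "colsX = {p. \<exists>q. (p, q) \<in> ED \<and> fst p \<in> \<Omega>'' \<and> fst q \<in> N - \<Omega>''}"
      define A1 where "A1 = hemb ` rowsC"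
      define B1 where "B1 = hemb ` colsC"
      define A2 where "A2 = (\<lambda>w. ((None::'v option), (Inl w :: 'v port + nat))) ` (W \<inter> P)"
      define B2 where "B2 = pemb ` (W \<inter> P)"
      have cutX: "cut_rank F ED N \<Omega>'' = rank_mat rowsX colsX (emat F ED)"
        unfolding cut_rank_def rowsX_def colsX_def emat_def by simp
      have crossE: "\<And>a i b j. ((a, i), (b, j)) \<in> E \<Longrightarrow> a \<in> \<Omega> \<Longrightarrow> b \<in> V - \<Omega> \<Longrightarrow>
          hemb (b, j) \<in> rowsX \<and> hemb (a, i) \<in> colsX \<and> layer a < l"
      proof -
        fix a i b j assume E1: "((a, i), (b, j)) \<in> E" and a: "a \<in> \<Omega>" and b: "b \<in> V - \<Omega>"
        have ne: "a \<in> V \<and> b \<in> V \<and> i < n \<and> j < n \<and> layer b = Suc (layer a)" by (rule net_edge[OF net E1])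
        have lb: "layer b < l + 1" and nb: "Some b \<notin> \<Omega>''" using outO[OF b] by blast+
        have la: "layer a < l" using lb ne by simp
        have sa: "Some a \<in> \<Omega>''" using inO[OF a] la by simp
        have ed: "(hemb (a, i), hemb (b, j)) \<in> ED" using keepall E1 by (simp add: hemb_def)
        have "Some b \<in> N - \<Omega>''" using ne nb by (auto simp: N_def)
        hence "hemb (b, j) \<in> rowsX \<and> hemb (a, i) \<in> colsX"
          using ed sa unfolding rowsX_def colsX_def by (auto simp: hemb_def)
        thus "hemb (b, j) \<in> rowsX \<and> hemb (a, i) \<in> colsX \<and> layer a < l" using la by blast
      qed
      have colsC_layer: "\<And>a i. (a, i) \<in> colsC \<Longrightarrow> layer a < l"
      proof -
        fix a i assume "(a, i) \<in> colsC"
        then obtain b j where "((a, i), (b, j)) \<in> E" "a \<in> \<Omega>" "b \<in> V - \<Omega>" unfolding colsC_def by auto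
        thus "layer a < l" using crossE by blast
      qed
      have rowsC_layer: "\<And>b j. (b, j) \<in> rowsC \<Longrightarrow> layer b < l + 1"
      proof -
        fix b j assume "(b, j) \<in> rowsC"
        hence "b \<in> V - \<Omega>" unfolding rowsC_def by auto
        thus "layer b < l + 1" using outO by blast
      qed
      have WP_form: "\<And>w. w \<in> W \<inter> P \<Longrightarrow> \<exists>v i. w = OutP v i \<and> v \<in> \<Omega> \<and> layer v = l \<and> i < n"
        unfolding P_def Pset_def by blast
      have A1sub: "A1 \<subseteq> rowsX"
      proof
        fix x assume "x \<in> A1"
        then obtain q p where "x = hemb q" "(p, q) \<in> E" "fst p \<in> \<Omega>" "fst q \<in> V - \<Omega>" unfolding A1_def rowsC_def by blast
        thus "x \<in> rowsX" using crossE by (cases p, cases q) auto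
      qed
      have B1sub: "B1 \<subseteq> colsX"
      proof
        fix x assume "x \<in> B1"
        then obtain q p where "x = hemb p" "(p, q) \<in> E" "fst p \<in> \<Omega>" "fst q \<in> V - \<Omega>" unfolding B1_def colsC_def by blast
        thus "x \<in> colsX" using crossE by (cases p, cases q) auto
      qed
      have WPedge: "\<And>w. w \<in> W \<inter> P \<Longrightarrow> (None, Inl w) \<in> rowsX \<and> pemb w \<in> colsX"
      proof -
        fix w assume w: "w \<in> W \<inter> P"
        then obtain v i where wv: "w = OutP v i" "v \<in> \<Omega>" "layer v = l" by (metis WP_form)
        have sv: "Some v \<in> \<Omega>''" using inO[OF wv(2)] wv(3) by simp
        have ed: "(pemb w, (None, Inl w)) \<in> ED" using toNone w by blast
        have "None \<in> N - \<Omega>''" using O3 .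
        thus "(None, Inl w) \<in> rowsX \<and> pemb w \<in> colsX"
          using ed sv wv(1) unfolding rowsX_def colsX_def by (auto simp: pemb_def)
      qed
      have A2sub: "A2 \<subseteq> rowsX" and B2sub: "B2 \<subseteq> colsX" using WPedge unfolding A2_def B2_def by blast+
      have fcolsX: "finite colsX"
      proof -
        have "colsX \<subseteq> hemb ` (V \<times> {..<n})" using src unfolding colsX_def by blast
        thus ?thesis using fV finite_subset by blast
      qed
      have fB1: "finite B1" and fB2: "finite B2"
        using fcolsX B1sub B2sub finite_subset by blast+
      have disj: "B1 \<inter> B2 = {}"
      proof (rule ccontr)
        assume "B1 \<inter> B2 \<noteq> {}"
        then obtain x where x1: "x \<in> B1" and x2: "x \<in> B2" by blast
        from x1 obtain a i where "x = hemb (a, i)" "layer a < l" unfolding B1_def using colsC_layer by auto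
        moreover from x2 obtain w where "w \<in> W \<inter> P" "x = pemb w" unfolding B2_def by blast
        then obtain v i' where "x = hemb (v, i')" "layer v = l" using WP_form hemb_pemb_Out by metis
        ultimately show False using hemb_eq by (metis less_irrefl)
      qed
      have z1: "\<forall>r\<in>A1. \<forall>b\<in>B2. emat F ED r b = 0"
      proof (intro ballI)
        fix r b assume r: "r \<in> A1" and b: "b \<in> B2"
        obtain b' j where rr: "r = hemb (b', j)" "layer b' < l + 1"
          using r rowsC_layer unfolding A1_def by auto
        obtain w where w: "w \<in> W \<inter> P" "b = pemb w" using b unfolding B2_def by blast
        then obtain v i where vi: "b = hemb (v, i)" "layer v = l" using WP_form hemb_pemb_Out by metis
        have "(b, r) \<notin> ED"
        proof
          assume "(b, r) \<in> ED"
          hence "((v, i), (b', j)) \<in> E" using rr vi keepall by (simp add: hemb_def)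
          thus False using net_edge[OF net] rr(2) vi(2) by fastforce
        qed
        thus "emat F ED r b = 0" by (simp add: emat_def)
      qed
      have z2: "\<forall>r\<in>A2. \<forall>b\<in>B1. emat F ED r b = 0"
      proof (intro ballI)
        fix r b assume r: "r \<in> A2" and b: "b \<in> B1"
        obtain w where w: "w \<in> W \<inter> P" "r = (None, Inl w)" using r unfolding A2_def by blast
        obtain a i where ai: "b = hemb (a, i)" "layer a < l" using b colsC_layer unfolding B1_def by auto
        have "(b, r) \<notin> ED"
        proof
          assume "(b, r) \<in> ED"
          hence "b = pemb w" using toNone w by blast
          then obtain v i' where "b = hemb (v, i')" "layer v = l" using WP_form w(1) hemb_pemb_Out by metis
          thus False using ai hemb_eq by (metis less_irrefl)
        qed
        thus "emat F ED r b = 0" by (simp add: emat_def)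
      qed
      have fcolsC: "finite colsC"
      proof -
        have "colsC \<subseteq> V \<times> {..<n}"
        proof
          fix p assume "p \<in> colsC"
          then obtain q where "(p, q) \<in> E" unfolding colsC_def by blast
          thus "p \<in> V \<times> {..<n}" using net_edge[OF net] by (cases p, cases q) blast
        qed
        thus ?thesis using fV finite_subset by blast
      qed
      have r1: "rank_mat A1 B1 (emat F ED) = cut_rank F E V \<Omega>"
      proof -
        have "rank_mat A1 B1 (emat F ED) = rank_mat rowsC colsC (\<lambda>q p. emat F ED (hemb q) (hemb p))"
          unfolding A1_def B1_def by (rule rank_reindex[OF inj_on_subset[OF inj_hemb subset_UNIV] fcolsC])
        also have "\<dots> = rank_mat rowsC colsC (emat F E)"
        proof (rule rank_cong, intro ballI)
          fix q p assume "q \<in> rowsC" "p \<in> colsC"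
          have "(hemb p, hemb q) \<in> ED \<longleftrightarrow> (p, q) \<in> E" using keepall by (cases p, cases q) (simp add: hemb_def)
          thus "emat F ED (hemb q) (hemb p) = emat F E q p" by (simp add: emat_def)
        qed
        also have "\<dots> = cut_rank F E V \<Omega>" unfolding cut_rank_def rowsC_def colsC_def emat_def by simp
        finally show ?thesis .
      qed
      have r2: "card (W \<inter> P) \<le> rank_mat A2 B2 (emat F ED)"
      proof -
        have ij: "inj_on pemb (W \<inter> P)" by (rule inj_pemb_Out) (use WP_form in blast)
        have "card B2 \<le> rank_mat A2 B2 (emat F ED)"
        proof (rule rank_unit_rows[OF fB2], intro ballI)
          fix b assume "b \<in> B2"
          then obtain w where w: "w \<in> W \<inter> P" "b = pemb w" unfolding B2_def by blast
          have "(None, Inl w) \<in> A2" using w unfolding A2_def by blast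
          moreover have "\<forall>b'\<in>B2. emat F ED (None, Inl w) b' = (if b' = b then 1 else 0)"
          proof
            fix b' assume "b' \<in> B2"
            then obtain w' where w': "w' \<in> W \<inter> P" "b' = pemb w'" unfolding B2_def by blast
            have "(b', (None, Inl w)) \<in> ED \<longleftrightarrow> b' = b" using toNone w w' by auto
            thus "emat F ED (None, Inl w) b' = (if b' = b then 1 else 0)" by (simp add: emat_def)
          qed
          ultimately show "\<exists>r\<in>A2. \<forall>b'\<in>B2. emat F ED r b' = (if b' = b then 1 else 0)" by blast
        qed
        moreover have "card B2 = card (W \<inter> P)" unfolding B2_def by (rule card_image[OF ij])
        ultimately show ?thesis by simp
      qed
      have "R \<le> cut_rank F E V \<Omega> + card (W \<inter> P)" using hyp Oc unfolding P_def by blast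
      also have "\<dots> \<le> rank_mat A1 B1 (emat F ED) + rank_mat A2 B2 (emat F ED)" using r1 r2 by simp
      also have "\<dots> \<le> rank_mat (A1 \<union> A2) (B1 \<union> B2) (emat F ED)" by (rule block_ge[OF fB1 fB2 disj z1 z2])
      also have "\<dots> \<le> rank_mat rowsX colsX (emat F ED)"
        using A1sub A2sub B1sub B2sub fcolsX by (intro rank_mono) auto
      finally show "R \<le> cut_rank F ED N \<Omega>''" using cutX by simp
    qed
  qed
  show ?thesis unfolding regular_def using adm cW le ge unfolding N_def ED_def by simp
qed

theorem lemma5:
  fixes F :: "'a::{field, finite} itself"
    and V :: "'v set" and E :: "(('v \<times> nat) \<times> ('v \<times> nat)) set"
    and n :: nat and layer :: "'v \<Rightarrow> nat" and lam :: nat and S :: 'v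
    and \<T> :: "'v set" and l :: nat and W' :: "'v port set"
  assumes net: "layered_adt_network V E n layer lam S"
    and dests: "\<T> \<subseteq> V" "\<T> \<noteq> {}" "S \<notin> \<T>"
    and l: "1 \<le> l" "l \<le> lam - 1"
    and reg: "regular F V E n layer S (min_rate F V E S \<T>) W'"
    and W'_in: "\<forall>w\<in>W'. \<exists>v j. w = InP v j \<and> layer v = l + 1"
  shows "\<exists>W. regular F V E n layer S (min_rate F V E S \<T>) W
           \<and> (\<forall>w\<in>W. \<exists>v i. w = OutP v i \<and> layer v = l)
           \<and> rank_mat W' W (port_inc F E) = min_rate F V E S \<T>"
proof -
  define R where "R = min_rate F V E S \<T>"
  have fV: "finite V" using net_finite[OF net] .
  define E0 where "E0 = Pset layer n l V"
  have fE0: "finite E0" unfolding E0_def by (rule Pset_finite[OF fV])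
  have s1: "\<forall>\<Omega>\<in>cset V layer l S. R \<le> cut_rank F E V \<Omega> + rank_mat W' (Pset layer n l \<Omega>) (port_inc F E)"
    using step1[OF net l(1) reg[folded R_def] W'_in] by blast
  have mm: "\<forall>A. A \<subseteq> E0 \<longrightarrow> R \<le> rho F E V n layer l S A + rank_mat W' (E0 - A) (port_inc F E)"
    using minmax_hyp[OF net s1] unfolding E0_def by blast
  obtain I where I: "I \<subseteq> E0" "card I = R" "rho F E V n layer l S I = card I"
      "rank_mat W' I (port_inc F E) = card I"
    using matroid_intersection[OF fE0 rho_mrank[OF net, where F=F and l=l, folded E0_def]
        r2_mrank[OF fE0, where W'=W' and F=F and E=E] mm] by blast
  have hyp: "\<forall>\<Omega>\<in>cset V layer l S. R \<le> cut_rank F E V \<Omega> + card (I \<inter> Pset layer n l \<Omega>)"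
  proof
    fix \<Omega> assume "\<Omega> \<in> cset V layer l S"
    from rho_le[OF fV this, where F=F and E=E and n=n and X=I] I(2,3)
    show "R \<le> cut_rank F E V \<Omega> + card (I \<inter> Pset layer n l \<Omega>)" by simp
  qed
  have regI: "regular F V E n layer S R I"
    by (rule step2[OF net I(1)[unfolded E0_def] I(2) hyp])
  have "\<forall>w\<in>I. \<exists>v i. w = OutP v i \<and> layer v = l" using I(1) unfolding E0_def Pset_def by blast
  thus ?thesis using regI I(2,4) unfolding R_def by auto
qed

end
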